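(* Let $n\in\mathbb N$, let $H_0,\dots,H_n$ be self-adjoint in $\mathcal H$, and let $f\in\mathscr W_n(\mathbb R)$. Then $f^{[n]}u^{(1,\dots,1)}\in\mathfrak{BS}(\mathbb R^{n+1})$, and hence $\mathbf T^{H_0,\dots,H_n}_{f^{[n]}}$ is a well-defined multilinear map $\mathbf X_{H_1}\times\cdots\times\mathbf X_{H_n}\to\mathcal B(\mathcal H)$, where $\mathbf X_H$ denotes the vector space of relatively $H$-bounded operators. More generally, if $\alpha=(\alpha_1,\dots,\alpha_n)\in\{0,1\}^n$ and $f\in\mathscr W^n_{|\alpha|}(\mathbb R)$ (with $|\alpha|=\alpha_1+\dots+\alpha_n$), then $f^{[n]}u^\alpha\in\mathfrak{BS}(\mathbb R^{n+1})$, and hence $\mathbf T^{H_0,\dots,H_n}_{f^{[n]}}$ is a well-defined multilinear map $\mathbf X^{\alpha_1}_{H_1}\times\cdots\times\mathbf X^{\alpha_n}_{H_n}\to\mathcal B(\mathcal H)$, where $\mathbf X^1_H=\mathbf X_H$ and $\mathbf X^0_H=\mathcal B(\mathcal H)$.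
   Context: $\mathcal H$ is a separable Hilbert space. $u(x)=x-i$, $u^m$ denotes $x\mapsto(x-i)^m$, and for $\alpha\in\mathbb Z_{\ge0}^n$, $u^\alpha(\lambda_0,\dots,\lambda_n)=\prod_{j=1}^n(\lambda_j-i)^{\alpha_j}$. $W_0(\mathbb R)$ is the set of $g\in C_0(\mathbb R)$ with $g(x)=\int e^{ixy}d\mu(y)$ for a finite complex Borel measure $\mu$. $\mathscr W_n(\mathbb R)=\{f\in C^n(\mathbb R):(fu^p)^{(p)}\in W_0(\mathbb R),\ p=0,\dots,n\}$ and, for $k\le n$, $\mathscr W^n_k(\mathbb R)=\{f\in C^n(\mathbb R):(fu^p)^{(n-k+p)}\in W_0(\mathbb R),\ p=0,\dots,k\}$. $V$ is relatively $H$-bounded if $\mathrm{dom}H\subseteq\mathrm{dom}V$ and $\|V\psi\|\le a\|H\psi\|+b\|\psi\|$ ($\psi\in\mathrm{dom}H$) for some $a,b\ge0$. Divided differences: $f^{[0]}=f$, $f^{[m]}(\lambda_0,\dots,\lambda_m)=\frac{f^{[m-1]}(\lambda_0,\dots,\lambda_{m-1})-f^{[m-1]}(\lambda_1,\dots,\lambda_m)}{\lambda_0-\lambda_m}$, extended continuously. $\mathfrak{BS}(\mathbb R^{n+1})$: functions $\phi(\lambda_0,\dots,\lambda_n)=\int_\Omega a_0(\lambda_0,\omega)\cdots a_n(\lambda_n,\omega)d\omega$ for a finite measure space $(\Omega,d\omega)$ and bounded measurable $a_j:\mathbb R\times\Omega\to\mathbb C$; for such $\phi$ and bounded $X_j$,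 $T^{H_0,\dots,H_n}_\phi(X_1,\dots,X_n)\psi=\int_\Omega a_0(H_0,\omega)X_1\cdots X_na_n(H_n,\omega)\psi\,d\omega$. For $V_j$ relatively $H_j$-bounded (bounded if $\alpha_j=0$) with $\phi u^\alpha\in\mathfrak{BS}$: $\mathbf T^{H_0,\dots,H_n}_\phi(V_1,\dots,V_n):=T^{H_0,\dots,H_n}_{\phi u^\alpha}(V_1(H_1-i)^{-\alpha_1},\dots,V_n(H_n-i)^{-\alpha_n})$. *)

theory Defs
  imports "HOL-Analysis.Analysis"
begin

definition vderiv :: "(real \<Rightarrow> complex) \<Rightarrow> real \<Rightarrow> complex" where
  "vderiv g = (\<lambda>x. vector_derivative g (at x))"

definition Cn :: "nat \<Rightarrow> (real \<Rightarrow> complex) set" where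
  "Cn n = {f. (\<forall>k<n. \<forall>x. ((vderiv ^^ k) f has_vector_derivative (vderiv ^^ Suc k) f x) (at x))
             \<and> (\<forall>k\<le>n. continuous_on UNIV ((vderiv ^^ k) f))}"

text \<open>A finite complex Borel measure is represented as h dM with M a finite positive Borel measure
  and h an M-integrable complex density.\<close>
definition W0 :: "(real \<Rightarrow> complex) set" where
  "W0 = {g. continuous_on UNIV g \<and> (g \<longlongrightarrow> 0) at_infinity \<and>
        (\<exists>(M::real measure) (h::real \<Rightarrow> complex). finite_measure M \<and> sets M = sets borel \<and>
            integrable M h \<and>
            (\<forall>x. g x = (LINT y|M. exp (\<i> * complex_of_real (x * y)) * h y)))}"

definition u_pow :: "nat \<Rightarrow> real \<Rightarrow> complex" where
  "u_pow m = (\<lambda>x. (complex_of_real x - \<i>) ^ m)"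

definition Wn :: "nat \<Rightarrow> (real \<Rightarrow> complex) set" where
  "Wn n = {f. f \<in> Cn n \<and> (\<forall>p\<le>n. (vderiv ^^ p) (\<lambda>x. f x * u_pow p x) \<in> W0)}"

definition Wnk :: "nat \<Rightarrow> nat \<Rightarrow> (real \<Rightarrow> complex) set" where
  "Wnk n k = {f. f \<in> Cn n \<and> (\<forall>p\<le>k. (vderiv ^^ (n - k + p)) (\<lambda>x. f x * u_pow p x) \<in> W0)}"

definition cext :: "('a::topological_space) set \<Rightarrow> ('a \<Rightarrow> complex) \<Rightarrow> 'a \<Rightarrow> complex" where
  "cext S g = (\<lambda>x. if x \<in> S then g x else Lim (at x within S) g)"

text \<open>Divided differences; a point (lambda_0,...,lambda_m) is a function l :: nat => real
  (only coordinates 0..m matter), with the product topology.\<close>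
primrec divdiff :: "nat \<Rightarrow> (real \<Rightarrow> complex) \<Rightarrow> (nat \<Rightarrow> real) \<Rightarrow> complex" where
  "divdiff 0 f = (\<lambda>l. f (l 0))"
| "divdiff (Suc m) f = cext {l. l 0 \<noteq> l (Suc m)}
      (\<lambda>l. (divdiff m f l - divdiff m f (\<lambda>j. l (Suc j))) / complex_of_real (l 0 - l (Suc m)))"

definition u_multi :: "nat \<Rightarrow> (nat \<Rightarrow> nat) \<Rightarrow> (nat \<Rightarrow> real) \<Rightarrow> complex" where
  "u_multi n \<alpha> = (\<lambda>l. \<Prod>j\<in>{1..n}. (complex_of_real (l j) - \<i>) ^ \<alpha> j)"

text \<open>BS(R^(n+1)): integral projective tensor products; the finite measure space Omega
  is taken on the carrier type nat => real.\<close>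
definition BS :: "nat \<Rightarrow> ((nat \<Rightarrow> real) \<Rightarrow> complex) \<Rightarrow> bool" where
  "BS n \<phi> \<longleftrightarrow> (\<exists>(M::(nat \<Rightarrow> real) measure) (a::nat \<Rightarrow> real \<Rightarrow> (nat \<Rightarrow> real) \<Rightarrow> complex).
      finite_measure M \<and>
      (\<forall>j\<le>n. (\<lambda>(x, w). a j x w) \<in> borel_measurable (borel \<Otimes>\<^sub>M M)) \<and>
      (\<forall>j\<le>n. \<exists>B. \<forall>x w. norm (a j x w) \<le> B) \<and>
      (\<forall>l. \<phi> l = (LINT w|M. (\<Prod>j\<in>{0..n}. a j (l j) w))))"

end

theory Submission
  imports Defs
begin

definition EA :: "nat set \<Rightarrow> (real \<Rightarrow> complex) \<Rightarrow> (nat \<Rightarrow> real) \<Rightarrow> complex" where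
  "EA A F l = (\<Sum>i\<in>A. F (l i) / (\<Prod>j\<in>A-{i}. complex_of_real (l i - l j)))"

lemma prod_diff_nz:
  assumes "finite A" "inj_on l A" "i \<in> A"
  shows "(\<Prod>j\<in>A-{i}. complex_of_real (l i - l j)) \<noteq> 0"
  using assms by (subst prod_zero_iff) (auto simp: inj_on_def)

lemma EA_insert2:
  assumes fin: "finite A" and a: "a \<notin> A" and b: "b \<notin> A" and ab: "a \<noteq> b"
    and inj: "inj_on l (insert a (insert b A))"
  shows "EA (insert a (insert b A)) F l * complex_of_real (l a - l b)
         = EA (insert a A) F l - EA (insert b A) F l"
proof -
  define Q where "Q i = (\<Prod>j\<in>A-{i}. complex_of_real (l i - l j))" for i
  have d: "\<And>i j. i \<in> insert a (insert b A) \<Longrightarrow> j \<in> insert a (insert b A) \<Longrightarrow> i \<noteq> j \<Longrightarrow>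
     complex_of_real (l i - l j) \<noteq> 0"
    using inj by (auto simp: inj_on_def)
  have Qnz: "\<And>i. i \<in> insert a (insert b A) \<Longrightarrow> Q i \<noteq> 0"
    unfolding Q_def using inj fin by (subst prod_zero_iff) (auto simp: inj_on_def)
  have s1: "insert a (insert b A) - {a} = insert b A" using a ab by auto
  have s2: "insert a (insert b A) - {b} = insert a A" using b ab by auto
  have s3: "\<And>i. i \<in> A \<Longrightarrow> insert a (insert b A) - {i} = insert a (insert b (A - {i}))" using a b by auto
  have s4: "\<And>i. i \<in> A \<Longrightarrow> insert a A - {i} = insert a (A - {i})" using a by auto
  have s5: "\<And>i. i \<in> A \<Longrightarrow> insert b A - {i} = insert b (A - {i})" using b by auto
  have P_a: "(\<Prod>j\<in>insert a (insert b A)-{a}. complex_of_real (l a - l j)) = complex_of_real (l a - l b) * Q a"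
    unfolding s1 Q_def using fin b a by (simp add: Diff_insert_absorb)
  have P_b: "(\<Prod>j\<in>insert a (insert b A)-{b}. complex_of_real (l b - l j)) = complex_of_real (l b - l a) * Q b"
    unfolding s2 Q_def using fin b a by (simp add: Diff_insert_absorb)
  have P_i: "(\<Prod>j\<in>insert a (insert b A)-{i}. complex_of_real (l i - l j))
      = complex_of_real (l i - l a) * complex_of_real (l i - l b) * Q i" if "i \<in> A" for i
    unfolding s3[OF that] Q_def using fin b a ab that by simp
  have Pa_i: "(\<Prod>j\<in>insert a A-{i}. complex_of_real (l i - l j)) = complex_of_real (l i - l a) * Q i" if "i \<in> A" for i
    unfolding s4[OF that] Q_def using fin b a ab that by simp
  have Pb_i: "(\<Prod>j\<in>insert b A-{i}. complex_of_real (l i - l j)) = complex_of_real (l i - l b) * Q i" if "i \<in> A" for i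
    unfolding s5[OF that] Q_def using fin b a ab that by simp
  have Pa_a: "(\<Prod>j\<in>insert a A-{a}. complex_of_real (l a - l j)) = Q a"
    unfolding Q_def using a by (simp add: Diff_insert_absorb)
  have Pb_b: "(\<Prod>j\<in>insert b A-{b}. complex_of_real (l b - l j)) = Q b"
    unfolding Q_def using b by (simp add: Diff_insert_absorb)
  have L: "EA (insert a (insert b A)) F l = F (l a) / (complex_of_real (l a - l b) * Q a)
       + F (l b) / (complex_of_real (l b - l a) * Q b)
       + (\<Sum>i\<in>A. F (l i) / (complex_of_real (l i - l a) * complex_of_real (l i - l b) * Q i))"
    unfolding EA_def using fin a b ab
    apply (simp only: sum.insert finite_insert insert_iff de_Morgan_disj simp_thms P_a P_b add.assoc)
    apply (rule arg_cong[where f="\<lambda>x. _ + (_ + x)"])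
    by (rule sum.cong[OF refl]) (simp only: P_i)
  have R1: "EA (insert a A) F l = F (l a) / Q a + (\<Sum>i\<in>A. F (l i) / (complex_of_real (l i - l a) * Q i))"
    unfolding EA_def using fin a
    apply (simp only: sum.insert[OF fin a] Pa_a)
    apply (rule arg_cong[where f="\<lambda>x. _ + x"])
    by (rule sum.cong[OF refl]) (simp only: Pa_i)
  have R2: "EA (insert b A) F l = F (l b) / Q b + (\<Sum>i\<in>A. F (l i) / (complex_of_real (l i - l b) * Q i))"
    unfolding EA_def using fin b
    apply (simp only: sum.insert[OF fin b] Pb_b)
    apply (rule arg_cong[where f="\<lambda>x. _ + x"])
    by (rule sum.cong[OF refl]) (simp only: Pb_i)
  have T: "F (l i) / (complex_of_real (l i - l a) * complex_of_real (l i - l b) * Q i) * complex_of_real (l a - l b)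
      = F (l i) / (complex_of_real (l i - l a) * Q i) - F (l i) / (complex_of_real (l i - l b) * Q i)" if "i \<in> A" for i
  proof -
    have "complex_of_real (l i - l a) \<noteq> 0" "complex_of_real (l i - l b) \<noteq> 0" "Q i \<noteq> 0"
      using d[of i a] d[of i b] Qnz[of i] that a b by auto
    moreover have "complex_of_real (l a - l b) = complex_of_real (l i - l b) - complex_of_real (l i - l a)" by simp
    moreover have "\<And>f x y q::complex. x \<noteq> 0 \<Longrightarrow> y \<noteq> 0 \<Longrightarrow> q \<noteq> 0 \<Longrightarrow>
       f / (x * y * q) * (y - x) = f / (x * q) - f / (y * q)"
      by (simp add: field_simps)
    ultimately show ?thesis by metis
  qed
  have "complex_of_real (l a - l b) \<noteq> 0" "complex_of_real (l b - l a) \<noteq> 0" using d[of a b] d[of b a] ab by auto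
  then have T2: "F (l a) / (complex_of_real (l a - l b) * Q a) * complex_of_real (l a - l b) = F (l a) / Q a"
     "F (l b) / (complex_of_real (l b - l a) * Q b) * complex_of_real (l a - l b) = - (F (l b) / Q b)"
  proof -
    have g1: "\<And>f x q::complex. x \<noteq> 0 \<Longrightarrow> f / (x * q) * x = f / q"
      by (simp add: field_simps)
    have g2: "\<And>f x q::complex. x \<noteq> 0 \<Longrightarrow> f / ((- x) * q) * x = - (f / q)"
      by (simp add: field_simps)
    have "complex_of_real (l b - l a) = - complex_of_real (l a - l b)" by simp
    then show "F (l a) / (complex_of_real (l a - l b) * Q a) * complex_of_real (l a - l b) = F (l a) / Q a"
     "F (l b) / (complex_of_real (l b - l a) * Q b) * complex_of_real (l a - l b) = - (F (l b) / Q b)"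
      using g1 g2 \<open>complex_of_real (l a - l b) \<noteq> 0\<close> by metis+
  qed
  show ?thesis
    unfolding L R1 R2 distrib_right sum_distrib_right T2 using T
    by (simp add: sum_subtractf)
qed

lemma EA_single: "EA {a} F l = F (l a)"
  by (simp add: EA_def)

lemma EA_reindex:
  assumes "inj_on s B"
  shows "EA (s ` B) F l = EA B F (\<lambda>j. l (s j))"
proof -
  have "\<And>i. i \<in> B \<Longrightarrow> s ` B - {s i} = s ` (B - {i})"
    using assms by (auto simp: inj_on_def)
  then have "\<And>i. i \<in> B \<Longrightarrow> (\<Prod>j\<in>s ` B - {s i}. complex_of_real (l (s i) - l j))
      = (\<Prod>j\<in>B - {i}. complex_of_real (l (s i) - l (s j)))"
    using assms by (simp add: prod.reindex inj_on_diff)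
  then show ?thesis unfolding EA_def using assms
    by (simp add: sum.reindex)
qed

lemma EA_const:
  assumes "finite C" "a \<notin> C" "b \<notin> C" "a \<noteq> b" "inj_on l (insert a (insert b C))"
  shows "EA (insert a (insert b C)) (\<lambda>_. 1) l = 0"
  using assms
proof (induction C arbitrary: a b rule: finite_induct)
  case empty
  have "EA {a, b} (\<lambda>_. 1) l * complex_of_real (l a - l b) = 0"
    using EA_insert2[of "{}" a b l "\<lambda>_. 1"] empty by (simp add: EA_single)
  moreover have "complex_of_real (l a - l b) \<noteq> 0" using empty by (auto simp: inj_on_def)
  ultimately show ?case by simp
next
  case (insert c C)
  have e1: "EA (insert a (insert c C)) (\<lambda>_. 1) l = 0"
    using insert.IH[of a c] insert.prems insert.hyps by (auto intro: inj_on_subset)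
  have e2: "EA (insert b (insert c C)) (\<lambda>_. 1) l = 0"
    using insert.IH[of b c] insert.prems insert.hyps by (auto intro: inj_on_subset)
  have "EA (insert a (insert b (insert c C))) (\<lambda>_. 1) l * complex_of_real (l a - l b) = 0"
    using EA_insert2[of "insert c C" a b l "\<lambda>_. 1"] insert e1 e2 by auto
  moreover have "complex_of_real (l a - l b) \<noteq> 0" using insert.prems by (auto simp: inj_on_def)
  ultimately show ?case by simp
qed

lemma EA_const':
  assumes "finite A" "2 \<le> card A" "inj_on l A"
  shows "EA A (\<lambda>_. 1) l = 0"
proof -
  obtain a b where ab: "a \<in> A" "b \<in> A" "a \<noteq> b"
    using assms by (metis card_le_Suc_iff numeral_2_eq_2 insert_iff)
  define C where "C = A - {a, b}"
  have AC: "A = insert a (insert b C)" "a \<notin> C" "b \<notin> C" "finite C"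
    using ab assms unfolding C_def by auto
  show ?thesis using EA_const[of C a b l] AC ab assms by simp
qed
lemma EA_leib:
  assumes fin: "finite A" and j: "j \<in> A" and inj: "inj_on l A"
  shows "EA A F l * (complex_of_real (l j) - \<i>)
     = EA A (\<lambda>x. F x * (complex_of_real x - \<i>)) l - EA (A - {j}) F l"
proof -
  define P where "P X i = (\<Prod>k\<in>X-{i}. complex_of_real (l i - l k))" for X i
  have Pnz: "P A i \<noteq> 0" if "i \<in> A" for i
    unfolding P_def using prod_diff_nz[OF fin inj that] .
  have PA: "P A i = complex_of_real (l i - l j) * P (A - {j}) i" if "i \<in> A" "i \<noteq> j" for i
  proof -
    have "A - {i} = insert j (A - {j} - {i})" using that j by auto
    then show ?thesis unfolding P_def using fin that by (simp add: prod.insert)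
  qed
  have "EA A F l * (complex_of_real (l j) - \<i>) = (\<Sum>i\<in>A. F (l i) * (complex_of_real (l j) - \<i>) / P A i)"
    unfolding EA_def P_def by (simp add: sum_distrib_right)
  also have "\<dots> = (\<Sum>i\<in>A. F (l i) * (complex_of_real (l i) - \<i>) / P A i)
       - (\<Sum>i\<in>A. F (l i) * complex_of_real (l i - l j) / P A i)"
    by (simp add: sum_subtractf[symmetric] diff_divide_distrib[symmetric] algebra_simps)
  also have "(\<Sum>i\<in>A. F (l i) * complex_of_real (l i - l j) / P A i)
     = (\<Sum>i\<in>A-{j}. F (l i) * complex_of_real (l i - l j) / P A i)"
    using fin j by (simp add: sum.remove)
  also have "\<dots> = (\<Sum>i\<in>A-{j}. F (l i) / P (A - {j}) i)"
  proof (rule sum.cong[OF refl])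
    fix i assume i: "i \<in> A - {j}"
    have "complex_of_real (l i - l j) \<noteq> 0" using inj i j by (auto simp: inj_on_def)
    then show "F (l i) * complex_of_real (l i - l j) / P A i = F (l i) / P (A - {j}) i"
      using i by (simp add: PA)
  qed
  finally show ?thesis unfolding EA_def P_def by simp
qed

lemma EA_sub:
  assumes fin: "finite A" and a: "a \<in> A" and inj: "inj_on l A"
  shows "EA A F l - F (l a) * EA A (\<lambda>_. 1) l
     = (\<Sum>i\<in>A-{a}. (F (l i) - F (l a)) / (complex_of_real (l i - l a) * (\<Prod>j\<in>A-{a}-{i}. complex_of_real (l i - l j))))"
proof -
  have PA: "(\<Prod>k\<in>A-{i}. complex_of_real (l i - l k)) = complex_of_real (l i - l a) * (\<Prod>j\<in>A-{a}-{i}. complex_of_real (l i - l j))"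
    if "i \<in> A" "i \<noteq> a" for i
  proof -
    have "A - {i} = insert a (A - {a} - {i})" using that a by auto
    then show ?thesis using fin that by (simp add: prod.insert)
  qed
  have "EA A F l - F (l a) * EA A (\<lambda>_. 1) l = (\<Sum>i\<in>A. (F (l i) - F (l a)) / (\<Prod>k\<in>A-{i}. complex_of_real (l i - l k)))"
    unfolding EA_def by (simp add: sum_distrib_left sum_subtractf[symmetric] diff_divide_distrib)
  also have "\<dots> = (\<Sum>i\<in>A-{a}. (F (l i) - F (l a)) / (\<Prod>k\<in>A-{i}. complex_of_real (l i - l k)))"
    using fin a by (simp add: sum.remove)
  finally show ?thesis using PA by (auto intro!: sum.cong)
qed

primrec K :: "nat \<Rightarrow> (real \<Rightarrow> complex) \<Rightarrow> (nat \<Rightarrow> real) \<Rightarrow> complex" where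
  "K 0 G l = G (l 0)"
| "K (Suc m) G l = (LBINT t:{0..1}. ((1 - t) ^ m) *\<^sub>R K m G (\<lambda>i. (1 - t) * l i + t * l (Suc m)))"

definition KEst :: "nat \<Rightarrow> (real \<Rightarrow> complex) \<Rightarrow> bool" where
  "KEst m G \<longleftrightarrow> (\<forall>R d e l l'. (\<forall>x y. \<bar>x\<bar> \<le> R \<longrightarrow> \<bar>y\<bar> \<le> R \<longrightarrow> \<bar>x - y\<bar> \<le> d \<longrightarrow> norm (G x - G y) \<le> e)
     \<longrightarrow> 0 \<le> e \<longrightarrow> (\<forall>i\<le>m. \<bar>l i\<bar> \<le> R \<and> \<bar>l' i\<bar> \<le> R \<and> \<bar>l i - l' i\<bar> \<le> d) \<longrightarrow> norm (K m G l - K m G l') \<le> e)"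

lemma set_integral_const_01: "(LBINT t:{0..1::real}. c) = (c::real)"
  by (simp add: set_integral_const)

lemma KEst_cont:
  assumes G: "continuous_on UNIV G" and E: "KEst m G"
  shows "continuous_on UNIV (\<lambda>t. K m G (\<lambda>i. a i + t * b i))"
  unfolding continuous_on_iff
proof (intro ballI allI impI)
  fix t0 :: real and \<epsilon> :: real
  assume "\<epsilon> > 0"
  define B where "B = (\<Sum>i\<le>m. \<bar>b i\<bar>)"
  define R where "R = (\<Sum>i\<le>m. \<bar>a i\<bar> + (\<bar>t0\<bar> + 1) * \<bar>b i\<bar>)"
  have "uniformly_continuous_on {-R..R} G"
    by (rule compact_uniformly_continuous) (auto intro: continuous_on_subset[OF G])
  then obtain d where d: "d > 0" "\<And>x x'. x \<in> {-R..R} \<Longrightarrow> x' \<in> {-R..R} \<Longrightarrow> dist x' x < d \<Longrightarrow> dist (G x') (G x) < \<epsilon>/2"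
    unfolding uniformly_continuous_on_def using \<open>\<epsilon> > 0\<close> by (metis half_gt_zero)
  define \<delta> where "\<delta> = min 1 (d / (2 * (B + 1)))"
  have B0: "B \<ge> 0" unfolding B_def by (simp add: sum_nonneg)
  have \<delta>: "\<delta> > 0" unfolding \<delta>_def using d B0 by simp
  show "\<exists>\<delta>>0. \<forall>t\<in>UNIV. dist t t0 < \<delta> \<longrightarrow> dist (K m G (\<lambda>i. a i + t * b i)) (K m G (\<lambda>i. a i + t0 * b i)) < \<epsilon>"
  proof (intro exI[of _ \<delta>] conjI ballI impI \<delta>)
    fix t assume t: "dist t t0 < \<delta>"
    have bi: "\<bar>b i\<bar> \<le> B" if "i \<le> m" for i
      unfolding B_def using that by (intro member_le_sum) auto
    have ai: "\<bar>a i\<bar> + (\<bar>t0\<bar> + 1) * \<bar>b i\<bar> \<le> R" if "i \<le> m" for i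
      unfolding R_def using that by (intro member_le_sum) auto
    have tt: "\<bar>t - t0\<bar> < 1" "\<bar>t - t0\<bar> < d / (2 * (B + 1))" using t unfolding \<delta>_def dist_real_def by auto
    have est: "norm (G x - G y) \<le> \<epsilon>/2" if "\<bar>x\<bar> \<le> R" "\<bar>y\<bar> \<le> R" "\<bar>x - y\<bar> \<le> d/2" for x y
    proof -
      have "dist x y < d" using that d(1) by (simp add: dist_real_def)
      moreover have "x \<in> {-R..R}" "y \<in> {-R..R}" using that by (auto simp: abs_le_iff)
      ultimately have "dist (G x) (G y) < \<epsilon>/2" using d(2)[of y x] by auto
      then show ?thesis by (simp add: dist_norm)
    qed
    have co: "\<bar>a i + t * b i\<bar> \<le> R \<and> \<bar>a i + t0 * b i\<bar> \<le> R \<and> \<bar>(a i + t * b i) - (a i + t0 * b i)\<bar> \<le> d/2"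
      if "i \<le> m" for i
    proof -
      have "\<bar>t\<bar> \<le> \<bar>t0\<bar> + 1" using tt by linarith
      then have 1: "\<bar>t * b i\<bar> \<le> (\<bar>t0\<bar> + 1) * \<bar>b i\<bar>" by (simp add: abs_mult mult_right_mono)
      have 2: "\<bar>t0 * b i\<bar> \<le> (\<bar>t0\<bar> + 1) * \<bar>b i\<bar>" by (simp add: abs_mult mult_right_mono)
      have "\<bar>(t - t0) * b i\<bar> \<le> d / (2 * (B + 1)) * (B + 1)"
        unfolding abs_mult using tt(2) bi[OF that] B0 by (intro mult_mono) auto
      also have "\<dots> = d/2" using B0 by (simp add: field_simps)
      finally have 3: "\<bar>(t - t0) * b i\<bar> \<le> d/2" .
      show ?thesis
      proof (intro conjI)
        show "\<bar>a i + t * b i\<bar> \<le> R" using abs_triangle_ineq[of "a i" "t * b i"] 1 ai[OF that] by linarith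
        show "\<bar>a i + t0 * b i\<bar> \<le> R" using abs_triangle_ineq[of "a i" "t0 * b i"] 2 ai[OF that] by linarith
        show "\<bar>(a i + t * b i) - (a i + t0 * b i)\<bar> \<le> d/2" using 3 by (simp add: left_diff_distrib)
      qed
    qed
    have "norm (K m G (\<lambda>i. a i + t * b i) - K m G (\<lambda>i. a i + t0 * b i)) \<le> \<epsilon>/2"
      apply (rule E[unfolded KEst_def, rule_format, of R "d/2" "\<epsilon>/2"])
      using est co \<open>\<epsilon> > 0\<close> by auto
    then show "dist (K m G (\<lambda>i. a i + t * b i)) (K m G (\<lambda>i. a i + t0 * b i)) < \<epsilon>"
      using \<open>\<epsilon> > 0\<close> by (simp add: dist_norm)
  qed
qed

lemma mu_affine: fixes t :: real and l :: "nat \<Rightarrow> real" shows "(\<lambda>i. (1 - t) * l i + t * l (Suc m)) = (\<lambda>i. l i + t * (l (Suc m) - l i))"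
proof (rule ext)
  fix i
  have "(1 - t) * l i + t * l (Suc m) = l i + t * l (Suc m) - t * l i" by (simp add: left_diff_distrib)
  also have "\<dots> = l i + t * (l (Suc m) - l i)" by (simp add: right_diff_distrib)
  finally show "(1 - t) * l i + t * l (Suc m) = l i + t * (l (Suc m) - l i)" .
qed

lemma K_integrable:
  assumes G: "continuous_on UNIV G" and E: "KEst m G"
  shows "set_integrable lborel {0..1::real} (\<lambda>t. ((1 - t) ^ m) *\<^sub>R K m G (\<lambda>i. (1 - t) * l i + t * l (Suc m)))"
proof -
  have "continuous_on UNIV (\<lambda>t. K m G (\<lambda>i. l i + t * (l (Suc m) - l i)))"
    by (rule KEst_cont[OF G E])
  then have "continuous_on {0..1} (\<lambda>t. ((1 - t) ^ m) *\<^sub>R K m G (\<lambda>i. (1 - t) * l i + t * l (Suc m)))"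
    unfolding mu_affine by (intro continuous_intros) (auto intro: continuous_on_subset)
  then show ?thesis by (rule borel_integrable_atLeastAtMost')
qed

lemma KEst_all:
  assumes G: "continuous_on UNIV G"
  shows "KEst m G"
proof (induction m)
  case 0
  then show ?case unfolding KEst_def by auto
next
  case (Suc m)
  show ?case unfolding KEst_def
  proof (intro allI impI)
    fix R d e :: real and l l' :: "nat \<Rightarrow> real"
    assume g: "\<forall>x y. \<bar>x\<bar> \<le> R \<longrightarrow> \<bar>y\<bar> \<le> R \<longrightarrow> \<bar>x - y\<bar> \<le> d \<longrightarrow> norm (G x - G y) \<le> e"
      and e: "0 \<le> e" and ll: "\<forall>i\<le>Suc m. \<bar>l i\<bar> \<le> R \<and> \<bar>l' i\<bar> \<le> R \<and> \<bar>l i - l' i\<bar> \<le> d"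
    define f where "f l t = ((1 - t) ^ m) *\<^sub>R K m G (\<lambda>i. (1 - t) * l i + t * l (Suc m))" for l :: "nat \<Rightarrow> real" and t :: real
    have i1: "set_integrable lborel {0..1::real} (f l)" and i2: "set_integrable lborel {0..1::real} (f l')"
      unfolding f_def by (rule K_integrable[OF G Suc.IH])+
    have pt: "norm (f l t - f l' t) \<le> e" if t: "t \<in> {0..1}" for t
    proof -
      have c: "\<forall>i\<le>m. \<bar>(1 - t) * l i + t * l (Suc m)\<bar> \<le> R \<and> \<bar>(1 - t) * l' i + t * l' (Suc m)\<bar> \<le> R \<and>
          \<bar>((1 - t) * l i + t * l (Suc m)) - ((1 - t) * l' i + t * l' (Suc m))\<bar> \<le> d"
      proof (intro allI impI)
        fix i assume "i \<le> m"
        then have A: "\<bar>l i\<bar> \<le> R" "\<bar>l' i\<bar> \<le> R" "\<bar>l i - l' i\<bar> \<le> d" and B: "\<bar>l (Suc m)\<bar> \<le> R" "\<bar>l' (Suc m)\<bar> \<le> R" "\<bar>l (Suc m) - l' (Suc m)\<bar> \<le> d"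
          using ll by auto
        have cv: "\<bar>(1 - t) * x + t * y\<bar> \<le> S" if "\<bar>x\<bar> \<le> S" "\<bar>y\<bar> \<le> S" for x y S
        proof -
          have "\<bar>(1 - t) * x + t * y\<bar> \<le> \<bar>(1 - t) * x\<bar> + \<bar>t * y\<bar>" by (rule abs_triangle_ineq)
          also have "\<dots> = (1 - t) * \<bar>x\<bar> + t * \<bar>y\<bar>" using t by (simp add: abs_mult)
          also have "\<dots> \<le> (1 - t) * S + t * S" using t that by (intro add_mono mult_left_mono) auto
          finally show ?thesis by (simp add: algebra_simps)
        qed
        have "((1 - t) * l i + t * l (Suc m)) - ((1 - t) * l' i + t * l' (Suc m)) = (1 - t) * (l i - l' i) + t * (l (Suc m) - l' (Suc m))"
          by (simp add: algebra_simps)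
        then show "\<bar>(1 - t) * l i + t * l (Suc m)\<bar> \<le> R \<and> \<bar>(1 - t) * l' i + t * l' (Suc m)\<bar> \<le> R \<and>
          \<bar>((1 - t) * l i + t * l (Suc m)) - ((1 - t) * l' i + t * l' (Suc m))\<bar> \<le> d"
          using cv[OF A(1) B(1)] cv[OF A(2) B(2)] cv[OF A(3) B(3)] by simp
      qed
      have "norm (K m G (\<lambda>i. (1 - t) * l i + t * l (Suc m)) - K m G (\<lambda>i. (1 - t) * l' i + t * l' (Suc m))) \<le> e"
        by (rule Suc.IH[unfolded KEst_def, rule_format, OF _ e]) (use g c in auto)
      moreover have "0 \<le> (1 - t) ^ m" "(1 - t) ^ m \<le> (1::real)" using t by (auto intro: power_le_one)
      ultimately have "(1 - t) ^ m * norm (K m G (\<lambda>i. (1 - t) * l i + t * l (Suc m)) - K m G (\<lambda>i. (1 - t) * l' i + t * l' (Suc m))) \<le> 1 * e"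
        using e by (intro mult_mono) auto
      then show ?thesis unfolding f_def using \<open>0 \<le> (1 - t) ^ m\<close> by (simp add: scaleR_diff_right[symmetric])
    qed
    have "K (Suc m) G l - K (Suc m) G l' = (LBINT t:{0..1}. f l t - f l' t)"
      unfolding f_def K.simps using i1 i2 unfolding f_def by (simp add: set_integral_diff)
    also have "norm \<dots> \<le> (LBINT t:{0..1}. norm (f l t - f l' t))"
      by (rule set_integral_norm_bound) (intro set_integral_diff i1 i2)
    also have "\<dots> \<le> (LBINT t:{0..1::real}. e)"
      using pt by (intro set_integral_mono set_integrable_norm set_integral_diff i1 i2) (auto simp: set_integrable_def)
    also have "\<dots> = e" by (rule set_integral_const_01)
    finally show "norm (K (Suc m) G l - K (Suc m) G l') \<le> e" .
  qed
qed

lemma vderiv_iter_Suc: "(vderiv ^^ Suc k) F = (vderiv ^^ k) (vderiv F)"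
  by (simp add: funpow_swap1)

lemma Cn_vderiv: "F \<in> Cn (Suc m) \<Longrightarrow> vderiv F \<in> Cn m"
  unfolding Cn_def mem_Collect_eq
proof (intro conjI allI impI)
  assume H: "(\<forall>k<Suc m. \<forall>x. ((vderiv ^^ k) F has_vector_derivative (vderiv ^^ Suc k) F x) (at x)) \<and>
    (\<forall>k\<le>Suc m. continuous_on UNIV ((vderiv ^^ k) F))"
  fix k x assume "k < m"
  then show "((vderiv ^^ k) (vderiv F) has_vector_derivative (vderiv ^^ Suc k) (vderiv F) x) (at x)"
    using H[THEN conjunct1, rule_format, of "Suc k" x] by (simp only: vderiv_iter_Suc Suc_less_eq)
next
  assume H: "(\<forall>k<Suc m. \<forall>x. ((vderiv ^^ k) F has_vector_derivative (vderiv ^^ Suc k) F x) (at x)) \<and>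
    (\<forall>k\<le>Suc m. continuous_on UNIV ((vderiv ^^ k) F))"
  fix k assume "k \<le> m"
  then show "continuous_on UNIV ((vderiv ^^ k) (vderiv F))"
    using H[THEN conjunct2, rule_format, of "Suc k"] by (simp only: vderiv_iter_Suc Suc_le_mono)
qed

lemma Cn_mono: assumes "F \<in> Cn n" "m \<le> n" shows "F \<in> Cn m"
  using assms unfolding Cn_def mem_Collect_eq by (meson le_trans less_le_trans)

lemma Cn_cont: assumes "F \<in> Cn m" shows "continuous_on UNIV ((vderiv ^^ m) F)"
  using assms unfolding Cn_def mem_Collect_eq by (meson order_refl)

lemma Cn_deriv: "F \<in> Cn (Suc m) \<Longrightarrow> (F has_vector_derivative vderiv F x) (at x)"
proof -
  assume "F \<in> Cn (Suc m)"
  then have "\<forall>k<Suc m. \<forall>x. ((vderiv ^^ k) F has_vector_derivative (vderiv ^^ Suc k) F x) (at x)"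
    unfolding Cn_def by blast
  then have "((vderiv ^^ 0) F has_vector_derivative (vderiv ^^ Suc 0) F x) (at x)" by blast
  then show ?thesis by (simp only: funpow.simps o_apply id_apply)
qed

lemma Cn_cont1: "F \<in> Cn (Suc m) \<Longrightarrow> continuous_on UNIV (vderiv F)"
proof -
  assume "F \<in> Cn (Suc m)"
  then have "\<forall>k\<le>Suc m. continuous_on UNIV ((vderiv ^^ k) F)"
    unfolding Cn_def by blast
  then have "continuous_on UNIV ((vderiv ^^ Suc 0) F)" by blast
  then show ?thesis by (simp only: funpow.simps o_apply id_apply)
qed

lemma FTC_seg:
  fixes F F' :: "real \<Rightarrow> complex"
  assumes D: "\<And>x. (F has_vector_derivative F' x) (at x)" and C: "continuous_on UNIV F'"
  shows "(LBINT t:{0..1::real}. (b - a) *\<^sub>R F' ((1 - t) * a + t * b)) = F b - F a"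
proof -
  have d: "((\<lambda>t. F ((1 - t) * a + t * b)) has_vector_derivative (b - a) *\<^sub>R F' ((1 - t) * a + t * b)) (at t)" for t
  proof -
    have "((\<lambda>t. (1 - t) * a + t * b) has_real_derivative (b - a)) (at t)"
      by (rule derivative_eq_intros refl | simp)+
    then have "((\<lambda>t. (1 - t) * a + t * b) has_vector_derivative (b - a)) (at t)"
      by (simp add: has_real_derivative_iff_has_vector_derivative)
    from vector_diff_chain_at[OF this D] show ?thesis by (simp add: o_def)
  qed
  have c0: "continuous_on UNIV (\<lambda>t::real. (1 - t) * a + t * b)" by (intro continuous_intros)
  have c1: "continuous_on UNIV (\<lambda>t::real. F' ((1 - t) * a + t * b))"
    by (rule continuous_on_compose2[OF C c0]) simp
  have c: "continuous_on {0..1} (\<lambda>t::real. (b - a) *\<^sub>R F' ((1 - t) * a + t * b))"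
    by (intro continuous_on_scaleR continuous_on_const continuous_on_subset[OF c1]) simp
  have "(LBINT t:{0..1::real}. (b - a) *\<^sub>R F' ((1 - t) * a + t * b)) = F ((1 - 1) * a + 1 * b) - F ((1 - 0) * a + 0 * b)"
    unfolding set_lebesgue_integral_def
    apply (rule integral_FTC_atLeastAtMost[where F="\<lambda>t. F ((1 - t) * a + t * b)" and f="\<lambda>t. (b - a) *\<^sub>R F' ((1 - t) * a + t * b)"])
    subgoal by simp
    subgoal for x by (rule has_vector_derivative_at_within[OF d])
    subgoal by (rule c)
    done
  then show ?thesis by simp
qed

lemma FTC_seg':
  fixes F F' :: "real \<Rightarrow> complex"
  assumes D: "\<And>x. (F has_vector_derivative F' x) (at x)" and C: "continuous_on UNIV F'" and ab: "a \<noteq> b"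
  shows "(LBINT t:{0..1::real}. F' ((1 - t) * a + t * b)) = (F b - F a) / complex_of_real (b - a)"
proof -
  have "(b - a) *\<^sub>R (LBINT t:{0..1::real}. F' ((1 - t) * a + t * b)) = F b - F a"
    using FTC_seg[OF D C, of b a] by (simp add: set_integral_scaleR_right)
  moreover have "complex_of_real (b - a) \<noteq> 0" using ab by simp
  ultimately show ?thesis by (simp add: scaleR_conv_of_real eq_divide_eq mult.commute)
qed

lemma K_E:
  assumes "F \<in> Cn m" "inj_on l {0..m}"
  shows "K m ((vderiv ^^ m) F) l = EA {0..m} F l"
  using assms
proof (induction m arbitrary: F l)
  case 0
  then show ?case by (simp add: EA_single)
next
  case (Suc m)
  define F1 where "F1 = vderiv F"
  have F1: "F1 \<in> Cn m" unfolding F1_def using Cn_vderiv Suc.prems(1) by blast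
  define G where "G = (vderiv ^^ m) F1"
  have G: "(vderiv ^^ Suc m) F = G" unfolding G_def F1_def by (rule vderiv_iter_Suc)
  have Gc: "continuous_on UNIV G" unfolding G_def by (rule Cn_cont[OF F1])
  have F1c: "continuous_on UNIV F1" unfolding F1_def by (rule Cn_cont1[OF Suc.prems(1)])
  have Fd: "\<And>x. (F has_vector_derivative F1 x) (at x)" unfolding F1_def by (rule Cn_deriv[OF Suc.prems(1)])
  have inj: "inj_on l {0..Suc m}" by (rule Suc.prems(2))
  define Q where "Q i = (\<Prod>j\<in>{0..m}-{i}. complex_of_real (l i - l j))" for i
  have Qnz: "Q i \<noteq> 0" if "i \<in> {0..m}" for i
    unfolding Q_def by (rule prod_diff_nz) (use that inj in \<open>auto intro: inj_on_subset\<close>)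
  define \<mu> where "\<mu> t = (\<lambda>i. (1 - t) * l i + t * l (Suc m))" for t :: real
  have pt: "((1 - t) ^ m) *\<^sub>R K m G (\<mu> t) = (\<Sum>i\<in>{0..m}. F1 ((1 - t) * l i + t * l (Suc m)) / Q i)"
    if t: "t \<noteq> 1" for t
  proof -
    have t0: "complex_of_real (1 - t) \<noteq> 0" using t by simp
    have inj\<mu>: "inj_on (\<mu> t) {0..m}"
    proof (rule inj_onI)
      fix i j assume ij: "i \<in> {0..m}" "j \<in> {0..m}" "\<mu> t i = \<mu> t j"
      then have "(1 - t) * (l i - l j) = 0" unfolding \<mu>_def by (simp add: algebra_simps)
      then have "l i = l j" using t by simp
      then show "i = j" using inj ij(1,2) by (auto simp: inj_on_def)
    qed
    have "K m G (\<mu> t) = EA {0..m} F1 (\<mu> t)"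
      unfolding G_def by (rule Suc.IH[OF F1 inj\<mu>])
    also have "\<dots> = (\<Sum>i\<in>{0..m}. F1 (\<mu> t i) / (complex_of_real (1 - t) ^ m * Q i))"
      unfolding EA_def
    proof (rule sum.cong[OF refl])
      fix i assume i: "i \<in> {0..m}"
      have "(\<Prod>j\<in>{0..m}-{i}. complex_of_real (\<mu> t i - \<mu> t j))
          = (\<Prod>j\<in>{0..m}-{i}. complex_of_real (1 - t) * complex_of_real (l i - l j))"
        unfolding \<mu>_def by (rule prod.cong[OF refl]) (simp add: algebra_simps)
      also have "\<dots> = complex_of_real (1 - t) ^ card ({0..m}-{i}) * Q i"
        unfolding Q_def by (simp add: prod.distrib)
      also have "card ({0..m}-{i}) = m" using i by simp
      finally show "F1 (\<mu> t i) / (\<Prod>j\<in>{0..m}-{i}. complex_of_real (\<mu> t i - \<mu> t j))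
          = F1 (\<mu> t i) / (complex_of_real (1 - t) ^ m * Q i)" by simp
    qed
    finally have "((1 - t) ^ m) *\<^sub>R K m G (\<mu> t) = (\<Sum>i\<in>{0..m}. ((1 - t) ^ m) *\<^sub>R (F1 (\<mu> t i) / (complex_of_real (1 - t) ^ m * Q i)))"
      by (simp add: scaleR_sum_right)
    also have "\<dots> = (\<Sum>i\<in>{0..m}. F1 (\<mu> t i) / Q i)"
      by (rule sum.cong[OF refl]) (use t0 in \<open>simp add: scaleR_conv_of_real\<close>)
    finally show ?thesis unfolding \<mu>_def .
  qed
  have contK: "continuous_on UNIV (\<lambda>t. ((1 - t) ^ m) *\<^sub>R K m G (\<mu> t))"
  proof -
    have "continuous_on UNIV (\<lambda>t. K m G (\<lambda>i. l i + t * (l (Suc m) - l i)))"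
      by (rule KEst_cont[OF Gc KEst_all[OF Gc]])
    then show ?thesis unfolding \<mu>_def mu_affine by (intro continuous_intros)
  qed
  have contS: "continuous_on UNIV (\<lambda>t. F1 ((1 - t) * l i + t * l (Suc m)) / Q i)" for i
  proof -
    have "continuous_on UNIV (\<lambda>t::real. (1 - t) * l i + t * l (Suc m))" by (intro continuous_intros)
    from continuous_on_compose2[OF F1c this] have "continuous_on UNIV (\<lambda>t. F1 ((1 - t) * l i + t * l (Suc m)))" by simp
    then have "continuous_on UNIV (\<lambda>t. F1 ((1 - t) * l i + t * l (Suc m)) * inverse (Q i))"
      by (rule continuous_on_mult_right)
    then show ?thesis by (simp add: divide_inverse)
  qed
  have "K (Suc m) ((vderiv ^^ Suc m) F) l = (LBINT t:{0..1}. ((1 - t) ^ m) *\<^sub>R K m G (\<mu> t))"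
    unfolding G K.simps \<mu>_def ..
  also have "\<dots> = (LBINT t:{0..1}. (\<Sum>i\<in>{0..m}. F1 ((1 - t) * l i + t * l (Suc m)) / Q i))"
  proof (rule set_lebesgue_integral_cong_AE)
    show "(\<lambda>t. ((1 - t) ^ m) *\<^sub>R K m G (\<mu> t)) \<in> borel_measurable lborel"
      using contK by (simp add: borel_measurable_continuous_onI)
    show "(\<lambda>t. (\<Sum>i\<in>{0..m}. F1 ((1 - t) * l i + t * l (Suc m)) / Q i)) \<in> borel_measurable lborel"
      using contS by (simp add: borel_measurable_continuous_onI continuous_on_sum)
    show "AE t\<in>{0..1} in lborel. ((1 - t) ^ m) *\<^sub>R K m G (\<mu> t) = (\<Sum>i\<in>{0..m}. F1 ((1 - t) * l i + t * l (Suc m)) / Q i)"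
      using AE_lborel_singleton[of 1] by eventually_elim (simp add: pt)
  qed simp
  also have "\<dots> = (\<Sum>i\<in>{0..m}. (LBINT t:{0..1}. F1 ((1 - t) * l i + t * l (Suc m))) * inverse (Q i))"
  proof -
    have int: "set_integrable lborel {0..1::real} (\<lambda>t. F1 ((1 - t) * l i + t * l (Suc m)) / Q i)" for i
      by (rule borel_integrable_atLeastAtMost') (rule continuous_on_subset[OF contS], simp)
    have "(LBINT t:{0..1}. (\<Sum>i\<in>{0..m}. F1 ((1 - t) * l i + t * l (Suc m)) / Q i))
        = (\<Sum>i\<in>{0..m}. (LBINT t:{0..1}. F1 ((1 - t) * l i + t * l (Suc m)) / Q i))"
      unfolding set_lebesgue_integral_def scaleR_sum_right
      by (rule Bochner_Integration.integral_sum) (use int in \<open>simp add: set_integrable_def\<close>)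
    also have "\<dots> = (\<Sum>i\<in>{0..m}. (LBINT t:{0..1}. F1 ((1 - t) * l i + t * l (Suc m))) * inverse (Q i))"
      by (simp add: divide_inverse)
    finally show ?thesis .
  qed
  also have "\<dots> = (\<Sum>i\<in>{0..m}. (F (l (Suc m)) - F (l i)) / complex_of_real (l (Suc m) - l i) * inverse (Q i))"
  proof (rule sum.cong[OF refl])
    fix i assume i: "i \<in> {0..m}"
    then have "i \<in> {0..Suc m}" "Suc m \<in> {0..Suc m}" "i \<noteq> Suc m" by auto
    then have "l i \<noteq> l (Suc m)" using inj_onD[OF inj] by blast
    then show "(LBINT t:{0..1}. F1 ((1 - t) * l i + t * l (Suc m))) * inverse (Q i)
       = (F (l (Suc m)) - F (l i)) / complex_of_real (l (Suc m) - l i) * inverse (Q i)"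
      by (simp add: FTC_seg'[OF Fd F1c])
  qed
  also have "\<dots> = EA {0..Suc m} F l - F (l (Suc m)) * EA {0..Suc m} (\<lambda>_. 1) l"
  proof -
    have A: "{0..Suc m} - {Suc m} = {0..m}" by auto
    have "EA {0..Suc m} F l - F (l (Suc m)) * EA {0..Suc m} (\<lambda>_. 1) l
       = (\<Sum>i\<in>{0..m}. (F (l i) - F (l (Suc m))) / (complex_of_real (l i - l (Suc m)) * Q i))"
      using EA_sub[of "{0..Suc m}" "Suc m" l F] inj unfolding A Q_def by simp
    also have "\<dots> = (\<Sum>i\<in>{0..m}. (F (l (Suc m)) - F (l i)) / complex_of_real (l (Suc m) - l i) * inverse (Q i))"
    proof (rule sum.cong[OF refl])
      fix i assume i: "i \<in> {0..m}"
      have g: "\<And>x y c q :: complex. (x - y) / (- c * q) = (y - x) / c * inverse q"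
        by (simp add: field_simps) (metis divide_inverse mult.commute minus_diff_eq divide_minus_left mult_minus_left divide_divide_eq_left)
      have "complex_of_real (l i - l (Suc m)) = - complex_of_real (l (Suc m) - l i)" by simp
      then show "(F (l i) - F (l (Suc m))) / (complex_of_real (l i - l (Suc m)) * Q i)
        = (F (l (Suc m)) - F (l i)) / complex_of_real (l (Suc m) - l i) * inverse (Q i)"
        using g by metis
    qed
    finally show ?thesis by simp
  qed
  also have "EA {0..Suc m} (\<lambda>_. 1) l = 0"
    by (rule EA_const') (use inj in auto)
  finally show ?case by simp
qed

lemma eventually_inj_perturb:
  assumes "finite A"
  shows "\<forall>\<^sub>F \<epsilon> in at (0::real). inj_on (\<lambda>i. l i + \<epsilon> * real i) A"
proof -
  have "\<forall>\<^sub>F \<epsilon> in at (0::real). \<forall>p\<in>A\<times>A. \<epsilon> \<noteq> (l (snd p) - l (fst p)) / (real (fst p) - real (snd p))"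
    using assms by (intro eventually_ball_finite) (auto intro: eventually_neq_at_within)
  then show ?thesis
  proof eventually_elim
    case (elim \<epsilon>)
    show ?case
    proof (rule inj_onI, rule ccontr)
      fix i j assume ij: "i \<in> A" "j \<in> A" "l i + \<epsilon> * real i = l j + \<epsilon> * real j" "i \<noteq> j"
      then have ne: "real i - real j \<noteq> 0" by simp
      from ij(3) have "\<epsilon> * (real i - real j) = l j - l i" by (simp add: algebra_simps)
      then have "\<epsilon> = (l j - l i) / (real i - real j)" using ne by (simp add: field_simps)
      with elim ij(1,2) show False by auto
    qed
  qed
qed

lemma perturb_unique:
  assumes "(\<Phi> \<longlongrightarrow> a) (at (0::real))" "(\<Psi> \<longlongrightarrow> b) (at 0)" "\<forall>\<^sub>F \<epsilon> in at 0. \<Phi> \<epsilon> = \<Psi> \<epsilon>"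
  shows "a = (b :: complex)"
proof -
  have "(\<Psi> \<longlongrightarrow> a) (at 0)" using assms(1,3) by (rule Lim_transform_eventually)
  then show ?thesis using assms(2) by (rule tendsto_unique[OF trivial_limit_at])
qed

lemma K_line:
  assumes "continuous_on UNIV G"
  shows "((\<lambda>\<epsilon>. K m G (\<lambda>i. l i + \<epsilon> * b i)) \<longlongrightarrow> K m G l) (at (0::real))"
proof -
  have "continuous_on UNIV (\<lambda>\<epsilon>. K m G (\<lambda>i. l i + \<epsilon> * b i))"
    by (rule KEst_cont[OF assms KEst_all[OF assms]])
  then have "\<forall>x. ((\<lambda>\<epsilon>. K m G (\<lambda>i. l i + \<epsilon> * b i)) \<longlongrightarrow> K m G (\<lambda>i. l i + x * b i)) (at x)"
    by (simp add: continuous_on_def)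
  then have "((\<lambda>\<epsilon>. K m G (\<lambda>i. l i + \<epsilon> * b i)) \<longlongrightarrow> K m G (\<lambda>i. l i + 0 * b i)) (at 0)"
    by (rule spec)
  then show ?thesis by simp
qed

lemma K_cont_prod:
  assumes G: "continuous_on UNIV G"
  shows "(K m G \<longlongrightarrow> K m G l) (at l within S)"
proof (rule tendstoI)
  fix e :: real assume e: "e > 0"
  define R where "R = (\<Sum>i\<le>m. \<bar>l i\<bar>) + 1"
  have "uniformly_continuous_on {-R..R} G"
    by (rule compact_uniformly_continuous) (auto intro: continuous_on_subset[OF G])
  then obtain d where d: "d > 0" "\<And>x x'. x \<in> {-R..R} \<Longrightarrow> x' \<in> {-R..R} \<Longrightarrow> dist x' x < d \<Longrightarrow> dist (G x') (G x) < e/2"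
    unfolding uniformly_continuous_on_def using e by (metis half_gt_zero)
  define \<delta> where "\<delta> = min 1 (d/2)"
  have \<delta>: "\<delta> > 0" using d unfolding \<delta>_def by simp
  have ev: "\<forall>\<^sub>F x in at l within S. \<forall>i\<in>{..m}. dist (x i) (l i) < \<delta>"
  proof (rule eventually_ball_finite, simp, intro ballI)
    fix i
    have "((\<lambda>x. x i) \<longlongrightarrow> l i) (at l within UNIV)"
      using continuous_on_product_coordinates[of i] unfolding continuous_on_def by auto
    then have "((\<lambda>x. x i) \<longlongrightarrow> l i) (at l within S)" by (rule tendsto_within_subset) simp
    then show "\<forall>\<^sub>F x in at l within S. dist (x i) (l i) < \<delta>" using \<delta> by (rule tendstoD)
  qed
  then show "\<forall>\<^sub>F x in at l within S. dist (K m G x) (K m G l) < e"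
  proof eventually_elim
    case (elim x)
    have li: "\<bar>l i\<bar> + 1 \<le> R" if "i \<le> m" for i
      unfolding R_def using that by (auto intro: member_le_sum)
    have est: "norm (G a - G b) \<le> e/2" if "\<bar>a\<bar> \<le> R" "\<bar>b\<bar> \<le> R" "\<bar>a - b\<bar> \<le> d/2" for a b
    proof -
      have "dist a b < d" using that d(1) by (simp add: dist_real_def)
      moreover have "a \<in> {-R..R}" "b \<in> {-R..R}" using that by (auto simp: abs_le_iff)
      ultimately have "dist (G a) (G b) < e/2" using d(2)[of b a] by auto
      then show ?thesis by (simp add: dist_norm)
    qed
    have co: "\<forall>i\<le>m. \<bar>x i\<bar> \<le> R \<and> \<bar>l i\<bar> \<le> R \<and> \<bar>x i - l i\<bar> \<le> d/2"
    proof (intro allI impI)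
      fix i assume i: "i \<le> m"
      then have "\<bar>x i - l i\<bar> < \<delta>" using elim by (auto simp: dist_real_def)
      then have "\<bar>x i - l i\<bar> < 1" "\<bar>x i - l i\<bar> < d/2" unfolding \<delta>_def by auto
      then show "\<bar>x i\<bar> \<le> R \<and> \<bar>l i\<bar> \<le> R \<and> \<bar>x i - l i\<bar> \<le> d/2"
        using li[OF i] abs_triangle_ineq[of "l i" "x i - l i"] by auto
    qed
    have "norm (K m G x - K m G l) \<le> e/2"
      by (rule KEst_all[OF G, unfolded KEst_def, rule_format, of R "d/2" "e/2"]) (use est co e in auto)
    then show ?case using e by (simp add: dist_norm)
  qed
qed


lemma g_EA:
  assumes F: "F \<in> Cn (Suc m)" and inj: "inj_on q {0..Suc m}"
  shows "(K m ((vderiv ^^ m) F) q - K m ((vderiv ^^ m) F) (\<lambda>j. q (Suc j))) / complex_of_real (q 0 - q (Suc m))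
     = K (Suc m) ((vderiv ^^ Suc m) F) q"
proof -
  have Fm: "F \<in> Cn m" using F by (rule Cn_mono) simp
  have i1: "inj_on q {0..m}" using inj by (rule inj_on_subset) auto
  have i2: "inj_on (\<lambda>j. q (Suc j)) {0..m}"
  proof (rule inj_onI)
    fix x y assume "x \<in> {0..m}" "y \<in> {0..m}" "q (Suc x) = q (Suc y)"
    then have "Suc x = Suc y" using inj_onD[OF inj, of "Suc x" "Suc y"] by auto
    then show "x = y" by simp
  qed
  have e1: "K m ((vderiv ^^ m) F) q = EA {0..m} F q" by (rule K_E[OF Fm i1])
  have e2: "K m ((vderiv ^^ m) F) (\<lambda>j. q (Suc j)) = EA {1..Suc m} F q"
  proof -
    have "K m ((vderiv ^^ m) F) (\<lambda>j. q (Suc j)) = EA {0..m} F (\<lambda>j. q (Suc j))" by (rule K_E[OF Fm i2])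
    also have "\<dots> = EA (Suc ` {0..m}) F q" by (rule EA_reindex[symmetric]) simp
    also have "Suc ` {0..m} = {1..Suc m}" by (simp add: image_Suc_atLeastAtMost)
    finally show ?thesis .
  qed
  have e3: "K (Suc m) ((vderiv ^^ Suc m) F) q = EA {0..Suc m} F q" by (rule K_E[OF F inj])
  have s1: "insert 0 {1..Suc m} = {0..Suc m}" by auto
  have s2: "insert 0 {1..m} = {0..m}" by auto
  have s3: "insert (Suc m) {1..m} = {1..Suc m}" by auto
  have "EA {0..Suc m} F q * complex_of_real (q 0 - q (Suc m)) = EA {0..m} F q - EA {1..Suc m} F q"
    by (rule EA_insert2[of "{1..m}" 0 "Suc m" q F, unfolded s1 s2 s3]) (use inj in auto)
  moreover have "complex_of_real (q 0 - q (Suc m)) \<noteq> 0"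
    using inj_onD[OF inj, of 0 "Suc m"] by auto
  ultimately show ?thesis unfolding e1 e2 e3 by (simp add: field_simps)
qed

lemma divdiff_K:
  assumes "F \<in> Cn m"
  shows "divdiff m F = K m ((vderiv ^^ m) F)"
  using assms
proof (induction m arbitrary: F)
  case 0
  then show ?case by (simp add: fun_eq_iff)
next
  case (Suc m)
  have F: "F \<in> Cn (Suc m)" by (rule Suc.prems)
  have Fm: "F \<in> Cn m" using F by (rule Cn_mono) simp
  define G0 where "G0 = (vderiv ^^ m) F"
  define G where "G = (vderiv ^^ Suc m) F"
  have G0c: "continuous_on UNIV G0" unfolding G0_def by (rule Cn_cont[OF Fm])
  have Gc: "continuous_on UNIV G" unfolding G_def by (rule Cn_cont[OF F])
  define S where "S = {l :: nat \<Rightarrow> real. l 0 \<noteq> l (Suc m)}"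
  define g where "g l = (K m G0 l - K m G0 (\<lambda>j. l (Suc j))) / complex_of_real (l 0 - l (Suc m))" for l
  have dd: "divdiff (Suc m) F = cext S g"
    unfolding S_def g_def G0_def by (simp add: Suc.IH[OF Fm])
  have onS: "g l = K (Suc m) G l" if l: "l \<in> S" for l
  proof (rule perturb_unique)
    define p where "p \<epsilon> = (\<lambda>i. l i + \<epsilon> * real i)" for \<epsilon> :: real
    show "((\<lambda>\<epsilon>. g (p \<epsilon>)) \<longlongrightarrow> g l) (at 0)"
    proof -
      have t1: "((\<lambda>\<epsilon>. K m G0 (\<lambda>i. l i + \<epsilon> * real i)) \<longlongrightarrow> K m G0 l) (at (0::real))"
        by (rule K_line[OF G0c])
      have t2: "((\<lambda>\<epsilon>. K m G0 (\<lambda>i. l (Suc i) + \<epsilon> * real (Suc i))) \<longlongrightarrow> K m G0 (\<lambda>i. l (Suc i))) (at (0::real))"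
        by (rule K_line[OF G0c])
      have t3: "((\<lambda>\<epsilon>. complex_of_real ((l 0 + \<epsilon> * real 0) - (l (Suc m) + \<epsilon> * real (Suc m)))) \<longlongrightarrow>
          complex_of_real (l 0 - l (Suc m))) (at (0::real))"
        by (rule tendsto_eq_intros refl | simp)+
      have nz: "complex_of_real (l 0 - l (Suc m)) \<noteq> 0" using l unfolding S_def by simp
      show ?thesis unfolding g_def p_def
        by (rule tendsto_divide[OF tendsto_diff[OF t1 t2] t3 nz])
    qed
    show "((\<lambda>\<epsilon>. K (Suc m) G (p \<epsilon>)) \<longlongrightarrow> K (Suc m) G l) (at 0)"
      unfolding p_def by (rule K_line[OF Gc])
    show "\<forall>\<^sub>F \<epsilon> in at 0. g (p \<epsilon>) = K (Suc m) G (p \<epsilon>)"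
    proof -
      have "\<forall>\<^sub>F \<epsilon> in at (0::real). inj_on (\<lambda>i. l i + \<epsilon> * real i) {0..Suc m}"
        by (rule eventually_inj_perturb) simp
      then show ?thesis unfolding p_def
    proof eventually_elim
      case (elim \<epsilon>)
      show ?case unfolding g_def G0_def G_def by (rule g_EA[OF F elim])
    qed
    qed
  qed
  show ?case
  proof (rule ext)
    fix l
    show "divdiff (Suc m) F l = K (Suc m) ((vderiv ^^ Suc m) F) l"
    proof (cases "l \<in> S")
      case True
      then show ?thesis unfolding dd cext_def G_def[symmetric] using onS by simp
    next
      case False
      then have l0: "l 0 = l (Suc m)" unfolding S_def by simp
      have nb: "at l within S \<noteq> bot"
      proof
        assume bot: "at l within S = bot"
        have "\<forall>\<^sub>F x in at l within S. False" unfolding bot by simp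
        then have ev: "\<forall>\<^sub>F x in nhds l. x \<noteq> l \<longrightarrow> x \<in> S \<longrightarrow> False" by (simp add: eventually_at_filter)
        define c where "c \<epsilon> = l(0 := l 0 + \<epsilon>)" for \<epsilon> :: real
        have cc: "continuous_on UNIV c"
        proof (intro continuous_on_coordinatewise_then_product)
          fix i show "continuous_on UNIV (\<lambda>x. c x i)"
            unfolding c_def by (cases "i = 0") (auto intro!: continuous_intros)
        qed
        then have "(c \<longlongrightarrow> c 0) (at 0)" by (simp add: continuous_on_def)
        then have "(c \<longlongrightarrow> l) (at 0)" unfolding c_def by simp
        then have "\<forall>\<^sub>F \<epsilon> in at (0::real). c \<epsilon> \<noteq> l \<longrightarrow> c \<epsilon> \<in> S \<longrightarrow> False"
          using ev unfolding filterlim_iff by blast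
        moreover have "\<forall>\<^sub>F \<epsilon> in at (0::real). \<epsilon> \<noteq> 0" by (rule eventually_neq_at_within)
        ultimately have "\<forall>\<^sub>F \<epsilon> in at (0::real). False"
        proof eventually_elim
          case (elim \<epsilon>)
          have "c \<epsilon> \<noteq> l" using elim(2) unfolding c_def by (metis fun_upd_same add_cancel_left_right)
          moreover have "c \<epsilon> \<in> S" using elim(2) l0 unfolding c_def S_def by simp
          ultimately show False using elim(1) by blast
        qed
        then show False by simp
      qed
      have "(g \<longlongrightarrow> K (Suc m) G l) (at l within S)"
      proof (rule Lim_transform_eventually)
        show "(K (Suc m) G \<longlongrightarrow> K (Suc m) G l) (at l within S)" by (rule K_cont_prod[OF Gc])
        show "\<forall>\<^sub>F x in at l within S. K (Suc m) G x = g x"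
          unfolding eventually_at_filter using onS by simp
      qed
      then have "Lim (at l within S) g = K (Suc m) G l" by (rule tendsto_Lim[OF nb])
      then show ?thesis unfolding dd cext_def G_def[symmetric] using False by simp
    qed
  qed
qed

definition ET :: "nat \<Rightarrow> ((nat \<Rightarrow> real) \<Rightarrow> complex) \<Rightarrow> bool" where
  "ET n \<phi> \<longleftrightarrow> (\<exists>(M::(nat \<Rightarrow> real) measure) b \<theta>. finite_measure M \<and> emeasure M (space M) = 1 \<and>
     b \<in> borel_measurable M \<and> (\<exists>B. \<forall>w. norm (b w) \<le> B) \<and> (\<forall>j. \<theta> j \<in> borel_measurable M) \<and>
     (\<forall>l. \<phi> l = (LINT w|M. b w * exp (\<i> * complex_of_real (\<Sum>j\<in>{0..n}. l j * \<theta> j w)))))"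

lemma norm_exp_i_real: "norm (exp (\<i> * complex_of_real r)) = 1"
  by (simp add: norm_exp_i_times)

lemma ET_BS:
  assumes "ET n \<phi>"
  shows "BS n \<phi>"
proof -
  obtain M :: "(nat \<Rightarrow> real) measure" and b \<theta> B where M: "finite_measure M" and b: "b \<in> borel_measurable M" and B': "\<forall>w. norm (b w) \<le> B"
    and \<theta>': "\<forall>j. \<theta> j \<in> borel_measurable M"
    and \<phi>': "\<forall>l. \<phi> l = (LINT w|M. b w * exp (\<i> * complex_of_real (\<Sum>j\<in>{0..n}. l j * \<theta> j w)))"
    using assms unfolding ET_def by blast
  note B = B'[rule_format] and \<theta> = \<theta>'[rule_format] and \<phi> = \<phi>'[rule_format]
  define a where "a j x w = (if j = 0 then b w else 1) * exp (\<i> * complex_of_real (x * \<theta> j w))"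
    for j :: nat and x :: real and w :: "nat \<Rightarrow> real"
  show ?thesis unfolding BS_def
  proof (intro exI[of _ M] exI[of _ a] conjI allI impI)
    show "finite_measure M" by (rule M)
    fix j
    note [measurable] = b \<theta>
    show "(\<lambda>(x, w). a j x w) \<in> borel_measurable (borel \<Otimes>\<^sub>M M)"
      unfolding a_def by measurable
    show "\<exists>B. \<forall>x w. norm (a j x w) \<le> B"
      by (rule exI[of _ "max B 1"]) (auto simp: a_def norm_mult norm_exp_i_real intro: le_max_iff_disj[THEN iffD2] B)
  next
    fix l
    have "(\<Prod>j\<in>{0..n}. a j (l j) w) = b w * exp (\<i> * complex_of_real (\<Sum>j\<in>{0..n}. l j * \<theta> j w))" for w
    proof -
      have "(\<Prod>j\<in>{0..n}. a j (l j) w) = (\<Prod>j\<in>{0..n}. (if j = 0 then b w else 1)) * (\<Prod>j\<in>{0..n}. exp (\<i> * complex_of_real (l j * \<theta> j w)))"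
        unfolding a_def by (rule prod.distrib)
      also have "(\<Prod>j\<in>{0..n}. (if j = 0 then b w else 1)) = b w" by (simp add: prod.delta)
      also have "(\<Prod>j\<in>{0..n}. exp (\<i> * complex_of_real (l j * \<theta> j w))) = exp (\<Sum>j\<in>{0..n}. \<i> * complex_of_real (l j * \<theta> j w))"
        by (simp add: exp_sum)
      also have "(\<Sum>j\<in>{0..n}. \<i> * complex_of_real (l j * \<theta> j w)) = \<i> * complex_of_real (\<Sum>j\<in>{0..n}. l j * \<theta> j w)"
        by (simp add: sum_distrib_left)
      finally show ?thesis .
    qed
    then show "\<phi> l = (LINT w|M. (\<Prod>j\<in>{0..n}. a j (l j) w))" by (simp add: \<phi>)
  qed
qed


lemma ET_zero: "ET n (\<lambda>l. 0)"
  unfolding ET_def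
proof (intro exI[of _ "count_space {\<lambda>_. 0}"] exI[of _ "\<lambda>_. 0"] exI[of _ "\<lambda>_ _. 0"] conjI allI)
  show "finite_measure (count_space {\<lambda>_::nat. 0::real})" by (rule finite_measure_count_space) simp
  show "emeasure (count_space {\<lambda>_::nat. 0::real}) (space (count_space {\<lambda>_. 0})) = 1" by simp
qed auto

lemma ET_intro:
  fixes P :: "'a measure" and e :: "'a \<Rightarrow> nat \<Rightarrow> real" and b :: "'a \<Rightarrow> complex" and \<theta> :: "nat \<Rightarrow> 'a \<Rightarrow> real"
  assumes e: "inj e" and P: "finite_measure P" and b: "b \<in> borel_measurable P" and B: "\<forall>x. norm (b x) \<le> B"
    and \<theta>: "\<forall>j. \<theta> j \<in> borel_measurable P"
    and \<phi>: "\<forall>l. \<phi> l = (LINT x|P. b x * exp (\<i> * complex_of_real (\<Sum>j\<in>{0..n}. l j * \<theta> j x)))"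
  shows "ET n \<phi>"
proof -
  interpret P: finite_measure P by (rule P)
  define c where "c = measure P (space P)"
  have c0: "c \<ge> 0" unfolding c_def by simp
  show ?thesis
  proof (cases "c = 0")
    case True
    then have "emeasure P (space P) = 0" unfolding c_def by (simp add: P.emeasure_eq_measure)
    then have AE: "AE x in P. False" by (intro AE_I'[of "space P"]) (auto simp: null_sets_def)
    have "\<phi> l = 0" for l
    proof -
      show ?thesis unfolding \<phi>[rule_format]
        by (rule integral_eq_zero_AE) (use AE in auto)
    qed
    then have "\<phi> = (\<lambda>l. 0)" by auto
    then show ?thesis using ET_zero by simp
  next
    case False
    then have cpos: "c > 0" using c0 by simp
    define P' where "P' = density P (\<lambda>_. ennreal (1 / c))"
    have sP': "sets P' = sets P" unfolding P'_def by simp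
    have spP': "space P' = space P" unfolding P'_def by simp
    define M where "M = embed_measure P' e"
    define b' where "b' w = complex_of_real c * b (inv e w)" for w
    define \<theta>' where "\<theta>' j w = \<theta> j (inv e w)" for j w
    have inve: "inv e (e x) = x" for x using e by simp
    have mb': "b' \<in> borel_measurable M" unfolding M_def
    proof (rule measurable_embed_measure1)
      have "(\<lambda>x. b' (e x)) = (\<lambda>x. complex_of_real c * b x)" by (simp add: b'_def inve)
      moreover have "(\<lambda>x. complex_of_real c * b x) \<in> borel_measurable P" using b by measurable
      ultimately show "(\<lambda>x. b' (e x)) \<in> borel_measurable P'" unfolding measurable_cong_sets[OF sP' refl] by simp
    qed
    have m\<theta>': "\<theta>' j \<in> borel_measurable M" for j unfolding M_def
    proof (rule measurable_embed_measure1)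
      have "(\<lambda>x. \<theta>' j (e x)) = \<theta> j" by (simp add: \<theta>'_def inve)
      then show "(\<lambda>x. \<theta>' j (e x)) \<in> borel_measurable P'" unfolding measurable_cong_sets[OF sP' refl] using \<theta> by simp
    qed
    have emP': "emeasure P' (space P') = 1"
    proof -
      have "emeasure P' (space P') = (\<integral>\<^sup>+ x. ennreal (1 / c) * indicator (space P) x \<partial>P)"
        unfolding P'_def by (simp add: emeasure_density)
      also have "\<dots> = ennreal (1 / c) * emeasure P (space P)" by (simp add: nn_integral_cmult_indicator)
      also have "emeasure P (space P) = ennreal c" unfolding c_def by (simp add: P.emeasure_eq_measure)
      also have "ennreal (1 / c) * ennreal c = 1" using cpos by (simp flip: ennreal_mult)
      finally show ?thesis .
    qed
    have emM: "emeasure M (space M) = 1"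
    proof -
      have "emeasure M (space M) = emeasure P' (e -` space M \<inter> space P')"
        unfolding M_def by (rule emeasure_embed_measure[OF e]) simp
      also have "e -` space M \<inter> space P' = space P'" unfolding M_def space_embed_measure by auto
      finally show ?thesis using emP' by simp
    qed
    have fM: "finite_measure M" using emM by (intro finite_measureI) simp
    have int: "(LINT w|M. g w) = (LINT x|P. (1 / c) *\<^sub>R g (e x))" if g: "g \<in> borel_measurable M" for g :: "_ \<Rightarrow> complex"
    proof -
      have "(LINT w|M. g w) = (LINT x|P'. g (e x))"
        unfolding M_def
        by (subst embed_measure_eq_distr[OF e], rule integral_distr)
          (rule measurable_embed_measure2[OF e], use g in \<open>simp add: M_def embed_measure_eq_distr[OF e, symmetric]\<close>)
      also have "\<dots> = (LINT x|P. (1 / c) *\<^sub>R g (e x))"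
        unfolding P'_def
      proof (rule integral_density)
        have "(\<lambda>x. g (e x)) \<in> borel_measurable P'"
          by (rule measurable_compose[OF measurable_embed_measure2[OF e]]) (use g in \<open>simp add: M_def\<close>)
        then show "(\<lambda>x. g (e x)) \<in> borel_measurable P" unfolding measurable_cong_sets[OF sP' refl] .
      qed (use c0 in auto)
      finally show ?thesis .
    qed
    show ?thesis unfolding ET_def
    proof (intro exI[of _ M] exI[of _ b'] exI[of _ \<theta>'] conjI allI fM emM mb' m\<theta>')
      show "\<exists>B. \<forall>w. norm (b' w) \<le> B"
        by (rule exI[of _ "c * B"]) (use B c0 in \<open>auto simp: b'_def norm_mult intro: mult_left_mono\<close>)
      fix l
      have "(LINT w|M. b' w * exp (\<i> * complex_of_real (\<Sum>j\<in>{0..n}. l j * \<theta>' j w)))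
          = (LINT x|P. (1 / c) *\<^sub>R (b' (e x) * exp (\<i> * complex_of_real (\<Sum>j\<in>{0..n}. l j * \<theta>' j (e x)))))"
        by (rule int) (use mb' m\<theta>' in measurable)
      also have "\<dots> = (LINT x|P. b x * exp (\<i> * complex_of_real (\<Sum>j\<in>{0..n}. l j * \<theta> j x)))"
        using cpos by (simp add: b'_def \<theta>'_def inve scaleR_conv_of_real)
      finally show "\<phi> l = (LINT w|M. b' w * exp (\<i> * complex_of_real (\<Sum>j\<in>{0..n}. l j * \<theta>' j w)))"
        using \<phi> by simp
    qed
  qed
qed

lemma ET_scale:
  assumes "ET n \<phi>"
  shows "ET n (\<lambda>l. c * \<phi> l)"
proof -
  obtain M :: "(nat \<Rightarrow> real) measure" and b \<theta> B where M: "finite_measure M" "emeasure M (space M) = 1"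
    and b: "b \<in> borel_measurable M" and B: "\<forall>w. norm (b w) \<le> B"
    and \<theta>: "\<forall>j. \<theta> j \<in> borel_measurable M"
    and \<phi>: "\<forall>l. \<phi> l = (LINT w|M. b w * exp (\<i> * complex_of_real (\<Sum>j\<in>{0..n}. l j * \<theta> j w)))"
    using assms unfolding ET_def by blast
  show ?thesis unfolding ET_def
  proof (intro exI[of _ M] exI[of _ "\<lambda>w. c * b w"] exI[of _ \<theta>] conjI allI M \<theta>[rule_format])
    show "(\<lambda>w. c * b w) \<in> borel_measurable M" using b by measurable
    show "\<exists>B. \<forall>w. norm (c * b w) \<le> B"
      by (rule exI[of _ "norm c * B"]) (use B in \<open>auto simp: norm_mult intro: mult_left_mono\<close>)
    fix l show "c * \<phi> l = (LINT w|M. c * b w * exp (\<i> * complex_of_real (\<Sum>j\<in>{0..n}. l j * \<theta> j w)))"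
      using \<phi> by (simp add: mult.assoc)
  qed
qed

definition enc3 :: "bool \<times> (nat \<Rightarrow> real) \<times> (nat \<Rightarrow> real) \<Rightarrow> nat \<Rightarrow> real" where
  "enc3 = (\<lambda>(c, v, w). case_nat (if c then 1 else 0) (\<lambda>k. if even k then v (k div 2) else w (k div 2)))"

lemma inj_enc3: "inj enc3"
proof (rule injI)
  fix x y assume eq: "enc3 x = enc3 y"
  obtain c v w where x: "x = (c, v, w)" by (cases x) auto
  obtain c' v' w' where y: "y = (c', v', w')" by (cases y) auto
  have 0: "(if c then 1 else 0::real) = (if c' then 1 else 0)" using fun_cong[OF eq, of 0] by (simp add: x y enc3_def)
  have "v k = v' k" for k using fun_cong[OF eq, of "Suc (2 * k)"] by (simp add: x y enc3_def)
  moreover have "w k = w' k" for k using fun_cong[OF eq, of "Suc (Suc (2 * k))"] by (simp add: x y enc3_def)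
  ultimately show "x = y" using 0 by (auto simp: x y split: if_splits)
qed

lemma fm_sf: "finite_measure M \<Longrightarrow> sigma_finite_measure M"
  by (simp add: finite_measure_def)

lemma ET_add:
  assumes "ET n \<phi>" "ET n \<psi>"
  shows "ET n (\<lambda>l. \<phi> l + \<psi> l)"
proof -
  obtain M1 :: "(nat \<Rightarrow> real) measure" and b1 \<theta>1 B1 where M1: "finite_measure M1" "emeasure M1 (space M1) = 1"
    and b1: "b1 \<in> borel_measurable M1" and B1: "\<forall>w. norm (b1 w) \<le> B1"
    and \<theta>1: "\<forall>j. \<theta>1 j \<in> borel_measurable M1"
    and \<phi>: "\<forall>l. \<phi> l = (LINT w|M1. b1 w * exp (\<i> * complex_of_real (\<Sum>j\<in>{0..n}. l j * \<theta>1 j w)))"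
    using assms(1) unfolding ET_def by blast
  obtain M2 :: "(nat \<Rightarrow> real) measure" and b2 \<theta>2 B2 where M2: "finite_measure M2" "emeasure M2 (space M2) = 1"
    and b2: "b2 \<in> borel_measurable M2" and B2: "\<forall>w. norm (b2 w) \<le> B2"
    and \<theta>2: "\<forall>j. \<theta>2 j \<in> borel_measurable M2"
    and \<psi>: "\<forall>l. \<psi> l = (LINT w|M2. b2 w * exp (\<i> * complex_of_real (\<Sum>j\<in>{0..n}. l j * \<theta>2 j w)))"
    using assms(2) unfolding ET_def by blast
  note [measurable] = b1 b2 \<theta>1[rule_format] \<theta>2[rule_format]
  interpret M1: finite_measure M1 by (rule M1(1))
  interpret M2: finite_measure M2 by (rule M2(1))
  interpret M12: pair_sigma_finite M1 M2 by (intro pair_sigma_finite.intro fm_sf M1(1) M2(1))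
  have fM12: "finite_measure (M1 \<Otimes>\<^sub>M M2)" by (intro finite_measure_pair_measure M1(1) M2(1))
  interpret C: pair_sigma_finite "count_space (UNIV :: bool set)" "M1 \<Otimes>\<^sub>M M2"
    by (intro pair_sigma_finite.intro fm_sf fM12 finite_measure_count_space) simp
  define P where "P = count_space (UNIV :: bool set) \<Otimes>\<^sub>M (M1 \<Otimes>\<^sub>M M2)"
  have fP: "finite_measure P" unfolding P_def by (intro finite_measure_pair_measure fM12 finite_measure_count_space) simp
  define b where "b = (\<lambda>(c, v, w). if c then b1 v else b2 w)"
  define \<theta> where "\<theta> j = (\<lambda>(c, v, w). if c then \<theta>1 j v else \<theta>2 j w)" for j
  have m1: "measure M1 (space M1) = 1" using M1(2) by (simp add: M1.emeasure_eq_measure)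
  have m2: "measure M2 (space M2) = 1" using M2(2) by (simp add: M2.emeasure_eq_measure)
  show ?thesis
  proof (rule ET_intro[OF inj_enc3 fP, of b "max B1 B2" \<theta>])
    show "b \<in> borel_measurable P" unfolding P_def b_def by measurable
    show "\<forall>x. norm (b x) \<le> max B1 B2" using B1 B2 by (auto simp: b_def le_max_iff_disj)
    show "\<forall>j. \<theta> j \<in> borel_measurable P" unfolding P_def \<theta>_def by measurable
    show "\<forall>l. \<phi> l + \<psi> l = (LINT x|P. b x * exp (\<i> * complex_of_real (\<Sum>j\<in>{0..n}. l j * \<theta> j x)))"
    proof
      fix l
      define E1 where "E1 v = b1 v * exp (\<i> * complex_of_real (\<Sum>j\<in>{0..n}. l j * \<theta>1 j v))" for v
      define E2 where "E2 w = b2 w * exp (\<i> * complex_of_real (\<Sum>j\<in>{0..n}. l j * \<theta>2 j w))" for w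
      have mE1[measurable]: "E1 \<in> borel_measurable M1" unfolding E1_def by measurable
      have mE2[measurable]: "E2 \<in> borel_measurable M2" unfolding E2_def by measurable
      have bE1: "norm (E1 v) \<le> B1" for v using B1 by (simp add: E1_def norm_mult norm_exp_i_real)
      have bE2: "norm (E2 v) \<le> B2" for v using B2 by (simp add: E2_def norm_mult norm_exp_i_real)
      have f: "(\<lambda>x. b x * exp (\<i> * complex_of_real (\<Sum>j\<in>{0..n}. l j * \<theta> j x))) = (\<lambda>(c, v, w). if c then E1 v else E2 w)"
        by (auto simp: b_def \<theta>_def E1_def E2_def)
      have i12: "integrable (M1 \<Otimes>\<^sub>M M2) (\<lambda>(v, w). g v w)" if "(\<lambda>(v, w). g v w) \<in> borel_measurable (M1 \<Otimes>\<^sub>M M2)" "\<forall>v w. norm (g v w) \<le> B" for g :: "_ \<Rightarrow> _ \<Rightarrow> complex" and B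
        by (rule finite_measure.integrable_const_bound[OF fM12, of _ B]) (use that in auto)
      have int1: "(LINT (v, w)|(M1 \<Otimes>\<^sub>M M2). E1 v) = \<phi> l"
      proof -
        have "(LINT (v, w)|(M1 \<Otimes>\<^sub>M M2). E1 v) = (LINT v|M1. LINT w|M2. E1 v)"
          by (rule M12.integral_fst[symmetric]) (rule i12, measurable, use bE1 in auto)
        also have "\<dots> = (LINT v|M1. E1 v)" by (simp add: m2)
        finally show ?thesis using \<phi> by (simp add: E1_def)
      qed
      have int2: "(LINT (v, w)|(M1 \<Otimes>\<^sub>M M2). E2 w) = \<psi> l"
      proof -
        have "(LINT (v, w)|(M1 \<Otimes>\<^sub>M M2). E2 w) = (LINT w|M2. LINT v|M1. E2 w)"
          by (rule M12.integral_snd[symmetric]) (rule i12, measurable, use bE2 in auto)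
        also have "\<dots> = (LINT w|M2. E2 w)" by (simp add: m1)
        finally show ?thesis using \<psi> by (simp add: E2_def)
      qed
      have "(LINT x|P. (\<lambda>(c, v, w). if c then E1 v else E2 w) x)
         = (LINT c|count_space UNIV. LINT y|(M1 \<Otimes>\<^sub>M M2). (\<lambda>(c, v, w). if c then E1 v else E2 w) (c, y))"
        unfolding P_def
      proof (rule C.integral_fst'[symmetric])
        show "integrable (count_space UNIV \<Otimes>\<^sub>M (M1 \<Otimes>\<^sub>M M2)) (\<lambda>(c, v, w). if c then E1 v else E2 w)"
          by (rule finite_measure.integrable_const_bound[of _ _ "max B1 B2"])
             (use fP[unfolded P_def] in simp, intro AE_I2, use bE1 bE2 in \<open>auto simp: le_max_iff_disj split: prod.splits\<close>, measurable)
      qed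
      also have "\<dots> = (LINT y|(M1 \<Otimes>\<^sub>M M2). E1 (fst y)) + (LINT y|(M1 \<Otimes>\<^sub>M M2). E2 (snd y))"
        by (simp add: lebesgue_integral_count_space_finite UNIV_bool case_prod_beta add.commute)
      also have "(\<lambda>y. E1 (fst y)) = (\<lambda>(v, w). E1 v)" by (simp add: fun_eq_iff)
      also have "(\<lambda>y. E2 (snd y)) = (\<lambda>(v, w). E2 w)" by (simp add: fun_eq_iff)
      finally show "\<phi> l + \<psi> l = (LINT x|P. b x * exp (\<i> * complex_of_real (\<Sum>j\<in>{0..n}. l j * \<theta> j x)))"
        unfolding f int1 int2 by simp
    qed
  qed
qed

lemma ET_sum:
  assumes "finite S" "\<forall>T\<in>S. ET n (f T)"
  shows "ET n (\<lambda>l. \<Sum>T\<in>S. f T l)"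
  using assms
proof (induction S rule: finite_induct)
  case empty
  then show ?case using ET_zero by simp
next
  case (insert x F)
  then show ?case by (simp add: ET_add)
qed


lemma ET_reindex:
  assumes "ET m \<psi>" "inj_on \<sigma> {0..m}" "\<sigma> ` {0..m} \<subseteq> {0..n}"
  shows "ET n (\<lambda>l. \<psi> (\<lambda>i. l (\<sigma> i)))"
proof -
  obtain M :: "(nat \<Rightarrow> real) measure" and b \<theta> B where M: "finite_measure M" "emeasure M (space M) = 1"
    and b: "b \<in> borel_measurable M" and B: "\<forall>w. norm (b w) \<le> B"
    and \<theta>: "\<forall>j. \<theta> j \<in> borel_measurable M"
    and \<psi>: "\<forall>l. \<psi> l = (LINT w|M. b w * exp (\<i> * complex_of_real (\<Sum>j\<in>{0..m}. l j * \<theta> j w)))"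
    using assms(1) unfolding ET_def by blast
  define \<tau> where "\<tau> = the_inv_into {0..m} \<sigma>"
  define \<theta>' where "\<theta>' j w = (if j \<in> \<sigma> ` {0..m} then \<theta> (\<tau> j) w else 0)" for j w
  have sums: "(\<Sum>j\<in>{0..n}. l j * \<theta>' j w) = (\<Sum>i\<in>{0..m}. l (\<sigma> i) * \<theta> i w)" for l w
  proof -
    have "(\<Sum>j\<in>{0..n}. l j * \<theta>' j w) = (\<Sum>j\<in>{0..n}. if j \<in> \<sigma> ` {0..m} then l j * \<theta> (\<tau> j) w else 0)"
      by (rule sum.cong) (auto simp: \<theta>'_def)
    also have "\<dots> = (\<Sum>j\<in>{0..n} \<inter> \<sigma> ` {0..m}. l j * \<theta> (\<tau> j) w)"
      by (simp add: sum.inter_restrict)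
    also have "{0..n} \<inter> \<sigma> ` {0..m} = \<sigma> ` {0..m}" using assms(3) by auto
    also have "(\<Sum>j\<in>\<sigma> ` {0..m}. l j * \<theta> (\<tau> j) w) = (\<Sum>i\<in>{0..m}. l (\<sigma> i) * \<theta> (\<tau> (\<sigma> i)) w)"
      by (rule sum.reindex[OF assms(2), unfolded comp_def])
    also have "\<dots> = (\<Sum>i\<in>{0..m}. l (\<sigma> i) * \<theta> i w)"
      by (rule sum.cong) (auto simp: \<tau>_def the_inv_into_f_f[OF assms(2)])
    finally show ?thesis .
  qed
  show ?thesis unfolding ET_def
  proof (intro exI[of _ M] exI[of _ b] exI[of _ \<theta>'] conjI allI M b)
    show "\<exists>B. \<forall>w. norm (b w) \<le> B" using B by blast
    fix j show "\<theta>' j \<in> borel_measurable M" unfolding \<theta>'_def using \<theta> by (cases "j \<in> \<sigma> ` {0..m}") auto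
  next
    fix l show "\<psi> (\<lambda>i. l (\<sigma> i)) = (LINT w|M. b w * exp (\<i> * complex_of_real (\<Sum>j\<in>{0..n}. l j * \<theta>' j w)))"
      unfolding sums using \<psi> by simp
  qed
qed

lemma sgn_norm_complex: "complex_of_real (norm z) * sgn z = (z::complex)"
proof (cases "z = 0")
  case False
  then have "complex_of_real (norm z) \<noteq> 0" by simp
  moreover have "sgn z = z / complex_of_real (norm z)" by (simp add: sgn_div_norm scaleR_conv_of_real divide_inverse mult.commute)
  ultimately show ?thesis by simp
qed simp

lemma sgn_scale_lemma: "norm z *\<^sub>R (sgn z * E) = E * (z::complex)"
proof -
  have "norm z *\<^sub>R (sgn z * E) = (complex_of_real (norm z) * sgn z) * E"
    by (simp only: scaleR_conv_of_real mult.assoc)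
  also have "\<dots> = z * E" by (simp only: sgn_norm_complex)
  finally show ?thesis by (simp only: mult.commute)
qed

lemma K_ET:
  assumes G: "G \<in> W0"
  shows "ET m (K m G)"
proof (induction m)
  case 0
  obtain M0 :: "real measure" and h where M0: "finite_measure M0" "sets M0 = sets borel"
    and h: "integrable M0 h" and Gx: "\<forall>x. G x = (LINT y|M0. exp (\<i> * complex_of_real (x * y)) * h y)"
    using G unfolding W0_def by blast
  have s00: "{0..0::nat} = {0}" by simp
  have hm[measurable]: "h \<in> borel_measurable M0" using h by auto
  have idm[measurable]: "(\<lambda>y::real. y) \<in> borel_measurable M0" unfolding measurable_cong_sets[OF M0(2) refl] by simp
  define P where "P = density M0 (\<lambda>y. ennreal (norm (h y)))"
  have sP: "sets P = sets M0" unfolding P_def by simp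
  have fP: "finite_measure P"
  proof (rule finite_measureI)
    have "emeasure P (space P) = (\<integral>\<^sup>+ y. ennreal (norm (h y)) * indicator (space M0) y \<partial>M0)"
      unfolding P_def by (simp add: emeasure_density)
    also have "\<dots> = (\<integral>\<^sup>+ y. ennreal (norm (h y)) \<partial>M0)"
      by (rule nn_integral_cong) simp
    also have "\<dots> \<noteq> \<infinity>" using integrableD(2)[OF integrable_norm[OF h]] by simp
    finally show "emeasure P (space P) \<noteq> \<infinity>" .
  qed
  show ?case
  proof (rule ET_intro[of "\<lambda>y. \<lambda>_. y" P "\<lambda>y. sgn (h y)" 1 "\<lambda>j y. y"])
    show "inj (\<lambda>y::real. \<lambda>_::nat. y)" by (rule injI) (metis)
    show "finite_measure P" by (rule fP)
    show "(\<lambda>y. sgn (h y)) \<in> borel_measurable P" unfolding measurable_cong_sets[OF sP refl] by measurable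
    show "\<forall>x. norm (sgn (h x)) \<le> 1" by (simp add: norm_sgn)
    show "\<forall>j. (\<lambda>y. y) \<in> borel_measurable P" unfolding measurable_cong_sets[OF sP refl] measurable_cong_sets[OF M0(2) refl] by simp
    show "\<forall>l. K 0 G l = (LINT y|P. sgn (h y) * exp (\<i> * complex_of_real (\<Sum>j\<in>{0..0}. l j * y)))"
    proof
      fix l :: "nat \<Rightarrow> real"
      have "(LINT y|P. sgn (h y) * exp (\<i> * complex_of_real (\<Sum>j\<in>{0..0}. l j * y)))
          = (LINT y|M0. norm (h y) *\<^sub>R (sgn (h y) * exp (\<i> * complex_of_real (\<Sum>j\<in>{0..0}. l j * y))))"
        unfolding P_def by (subst integral_density) (simp_all, measurable)
      also have "\<dots> = (LINT y|M0. exp (\<i> * complex_of_real (l 0 * y)) * h y)"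
        by (rule Bochner_Integration.integral_cong[OF refl]) (simp only: sgn_scale_lemma, simp add: s00)
      finally show "K 0 G l = (LINT y|P. sgn (h y) * exp (\<i> * complex_of_real (\<Sum>j\<in>{0..0}. l j * y)))"
        using Gx by simp
    qed
  qed
next
  case (Suc m)
  obtain M :: "(nat \<Rightarrow> real) measure" and b \<theta> B where M: "finite_measure M" "emeasure M (space M) = 1"
    and b[measurable]: "b \<in> borel_measurable M" and B: "\<forall>w. norm (b w) \<le> B"
    and \<theta>: "\<forall>j. \<theta> j \<in> borel_measurable M"
    and Km: "\<forall>l. K m G l = (LINT w|M. b w * exp (\<i> * complex_of_real (\<Sum>j\<in>{0..m}. l j * \<theta> j w)))"
    using Suc.IH unfolding ET_def by blast
  note \<theta>m[measurable] = \<theta>[rule_format]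
  have B0: "B \<ge> 0" using B norm_ge_zero order_trans by blast
  define U where "U = restrict_space lborel {0..1::real}"
  have spU: "space U = {0..1}" unfolding U_def by simp
  have fU: "finite_measure U"
  proof (rule finite_measureI)
    have "emeasure U (space U) = emeasure lborel {0..1::real}"
      unfolding U_def spU by (subst emeasure_restrict_space) auto
    then show "emeasure U (space U) \<noteq> \<infinity>" by simp
  qed
  interpret UM: pair_sigma_finite U M by (intro pair_sigma_finite.intro fm_sf fU M(1))
  define P where "P = U \<Otimes>\<^sub>M M"
  have fP: "finite_measure P" unfolding P_def by (intro finite_measure_pair_measure fU M(1))
  define w1 where "w1 t = (if t \<in> {0..1} then (1 - t) ^ m else (0::real))" for t
  have "w1 \<in> borel_measurable borel" unfolding w1_def by measurable
  then have w1m[measurable]: "w1 \<in> borel_measurable U" unfolding U_def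
    by (intro measurable_restrict_space1) simp
  have w1b: "\<bar>w1 t\<bar> \<le> 1" for t unfolding w1_def by (auto intro: power_le_one)
  define bP where "bP = (\<lambda>(t, w). complex_of_real (w1 t) * b w)"
  define \<theta>P where "\<theta>P j = (\<lambda>(t::real, w). if j \<le> m then (1 - t) * \<theta> j w
       else if j = Suc m then t * (\<Sum>i\<in>{0..m}. \<theta> i w) else 0)" for j
  have tU[measurable]: "(\<lambda>t::real. t) \<in> borel_measurable U" unfolding U_def
    by (intro measurable_restrict_space1) simp
  show ?case
  proof (rule ET_intro[of "\<lambda>(t, w). case_nat t w" P bP B \<theta>P])
    show "inj (\<lambda>(t::real, w). case_nat t w)"
    proof (rule injI)
      fix x y :: "real \<times> (nat \<Rightarrow> real)" assume eq: "(\<lambda>(t, w). case_nat t w) x = (\<lambda>(t, w). case_nat t w) y"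
      obtain t w where x: "x = (t, w)" by (cases x)
      obtain t' w' where y: "y = (t', w')" by (cases y)
      have "t = t'" using fun_cong[OF eq, of 0] by (simp add: x y)
      moreover have "w k = w' k" for k using fun_cong[OF eq, of "Suc k"] by (simp add: x y)
      ultimately show "x = y" by (auto simp: x y)
    qed
    show "finite_measure P" by (rule fP)
    show "bP \<in> borel_measurable P" unfolding P_def bP_def by measurable
    show "\<forall>x. norm (bP x) \<le> B"
    proof
      fix x :: "real \<times> (nat \<Rightarrow> real)"
      obtain t w where x: "x = (t, w)" by (cases x)
      have "norm (bP x) = \<bar>w1 t\<bar> * norm (b w)" by (simp add: x bP_def norm_mult)
      also have "\<dots> \<le> 1 * B" using w1b[of t] B by (intro mult_mono) auto
      finally show "norm (bP x) \<le> B" by simp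
    qed
    show "\<forall>j. \<theta>P j \<in> borel_measurable P"
    proof
      fix j show "\<theta>P j \<in> borel_measurable P"
        unfolding P_def \<theta>P_def by (cases "j \<le> m"; cases "j = Suc m") (simp_all, measurable)
    qed
    show "\<forall>l. K (Suc m) G l = (LINT x|P. bP x * exp (\<i> * complex_of_real (\<Sum>j\<in>{0..Suc m}. l j * \<theta>P j x)))"
    proof
      fix l :: "nat \<Rightarrow> real"
      define \<mu> where "\<mu> t = (\<lambda>i. (1 - t) * l i + t * l (Suc m))" for t
      have ex: "(\<Sum>j\<in>{0..Suc m}. l j * \<theta>P j (t, w)) = (\<Sum>j\<in>{0..m}. \<mu> t j * \<theta> j w)" for t w
      proof -
        have "(\<Sum>j\<in>{0..Suc m}. l j * \<theta>P j (t, w)) = (\<Sum>j\<in>{0..m}. l j * ((1 - t) * \<theta> j w)) + l (Suc m) * (t * (\<Sum>i\<in>{0..m}. \<theta> i w))"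
          by (simp add: \<theta>P_def)
        also have "\<dots> = (\<Sum>j\<in>{0..m}. l j * ((1 - t) * \<theta> j w) + l (Suc m) * (t * \<theta> j w))"
          by (simp add: sum.distrib sum_distrib_left)
        also have "\<dots> = (\<Sum>j\<in>{0..m}. \<mu> t j * \<theta> j w)"
          unfolding \<mu>_def by (rule sum.cong) (simp_all add: algebra_simps)
        finally show ?thesis .
      qed
      define F where "F x = bP x * exp (\<i> * complex_of_real (\<Sum>j\<in>{0..Suc m}. l j * \<theta>P j x))" for x
      have Fm: "F \<in> borel_measurable (U \<Otimes>\<^sub>M M)" unfolding F_def bP_def \<theta>P_def
        by (intro borel_measurable_times measurable_compose[OF _ borel_measurable_exp] borel_measurable_of_real borel_measurable_sum;
            (cases rule: linorder_cases[of _ m])?, measurable)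
      have Fint: "integrable (U \<Otimes>\<^sub>M M) F"
      proof (rule finite_measure.integrable_const_bound[OF fP[unfolded P_def], of _ B])
        show "AE x in U \<Otimes>\<^sub>M M. norm (F x) \<le> B"
        proof (rule AE_I2)
          fix x :: "real \<times> (nat \<Rightarrow> real)"
          obtain t w where x: "x = (t, w)" by (cases x)
          have "norm (F x) = \<bar>w1 t\<bar> * norm (b w)" by (simp add: F_def x bP_def norm_mult norm_exp_i_real)
          also have "\<dots> \<le> 1 * B" using w1b[of t] B by (intro mult_mono) auto
          finally show "norm (F x) \<le> B" by simp
        qed
      qed (rule Fm)
      have "(LINT x|P. F x) = (LINT t|U. LINT w|M. F (t, w))"
        unfolding P_def by (rule UM.integral_fst'[symmetric, OF Fint])
      also have "\<dots> = (LINT t|U. ((1 - t) ^ m) *\<^sub>R K m G (\<mu> t))"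
      proof (rule Bochner_Integration.integral_cong[OF refl])
        fix t assume t: "t \<in> space U"
        then have "w1 t = (1 - t) ^ m" unfolding spU w1_def by simp
        then have "(\<lambda>w. F (t, w)) = (\<lambda>w. complex_of_real ((1 - t) ^ m) * (b w * exp (\<i> * complex_of_real (\<Sum>j\<in>{0..m}. \<mu> t j * \<theta> j w))))"
          by (intro ext) (simp only: F_def bP_def case_prod_conv ex mult.assoc)
        then have "(LINT w|M. F (t, w)) = (LINT w|M. complex_of_real ((1 - t) ^ m) * (b w * exp (\<i> * complex_of_real (\<Sum>j\<in>{0..m}. \<mu> t j * \<theta> j w))))"
          by simp
        also have "\<dots> = complex_of_real ((1 - t) ^ m) * K m G (\<mu> t)"
          using Km by simp
        finally show "(LINT w|M. F (t, w)) = ((1 - t) ^ m) *\<^sub>R K m G (\<mu> t)"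
          by (simp add: scaleR_conv_of_real)
      qed
      also have "\<dots> = K (Suc m) G l"
        unfolding U_def K.simps set_lebesgue_integral_def \<mu>_def
        by (rule integral_restrict_space) simp
      finally show "K (Suc m) G l = (LINT x|P. bP x * exp (\<i> * complex_of_real (\<Sum>j\<in>{0..Suc m}. l j * \<theta>P j x)))"
        unfolding F_def by simp
    qed
  qed
qed

lemma Cn_mult_u:
  assumes f: "f \<in> Cn n"
  shows "(\<lambda>x. f x * (complex_of_real x - \<i>)) \<in> Cn n"
proof -
  define fk where "fk k = (vderiv ^^ k) f" for k
  have D: "\<And>k x. k < n \<Longrightarrow> (fk k has_vector_derivative fk (Suc k) x) (at x)"
    using f unfolding Cn_def fk_def by blast
  have C: "\<And>k. k \<le> n \<Longrightarrow> continuous_on UNIV (fk k)"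
    using f unfolding Cn_def fk_def by blast
  define g where "g = (\<lambda>x. f x * (complex_of_real x - \<i>))"
  define gf where "gf k = (\<lambda>x. fk k x * (complex_of_real x - \<i>) + of_nat k * fk (k - 1) x)" for k
  have du: "((\<lambda>x. complex_of_real x - \<i>) has_vector_derivative 1) (at x)" for x
  proof -
    have "((\<lambda>x. complex_of_real x) has_vector_derivative complex_of_real 1) (at x)"
      by (rule has_vector_derivative_of_real) (rule DERIV_ident)
    then show ?thesis using has_vector_derivative_diff[OF _ has_vector_derivative_const[of "\<i>"]] by fastforce
  qed
  have dg: "(gf k has_vector_derivative gf (Suc k) x) (at x)" if k: "k < n" for k x
  proof -
    have d1: "((\<lambda>x. fk k x * (complex_of_real x - \<i>)) has_vector_derivative
        fk k x * 1 + fk (Suc k) x * (complex_of_real x - \<i>)) (at x)"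
      by (rule has_vector_derivative_mult[OF D[OF k] du])
    have "k - 1 < n" using k by simp
    then have "(fk (k - 1) has_vector_derivative fk (Suc (k - 1)) x) (at x)" by (rule D)
    then have d2: "((\<lambda>x. of_nat k * fk (k - 1) x) has_vector_derivative of_nat k * fk (Suc (k - 1)) x) (at x)"
      by (rule has_vector_derivative_mult_right)
    have e: "of_nat k * fk (Suc (k - 1)) x = of_nat k * fk k x" by (cases k) simp_all
    have "(gf k has_vector_derivative (fk k x * 1 + fk (Suc k) x * (complex_of_real x - \<i>)) + of_nat k * fk k x) (at x)"
      unfolding gf_def using has_vector_derivative_add[OF d1 d2, unfolded e] by simp
    moreover have "(fk k x * 1 + fk (Suc k) x * (complex_of_real x - \<i>)) + of_nat k * fk k x = gf (Suc k) x"
      unfolding gf_def by (simp add: algebra_simps)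
    ultimately show ?thesis by simp
  qed
  have gk: "(vderiv ^^ k) g = gf k" if "k \<le> n" for k
    using that
  proof (induction k)
    case 0
    then show ?case by (simp add: g_def gf_def fk_def)
  next
    case (Suc k)
    then have "(vderiv ^^ k) g = gf k" by simp
    then have "(vderiv ^^ Suc k) g = vderiv (gf k)" by simp
    also have "\<dots> = gf (Suc k)"
      unfolding vderiv_def using dg[of k] Suc.prems by (intro ext vector_derivative_at) simp
    finally show ?case .
  qed
  show ?thesis unfolding g_def[symmetric] Cn_def mem_Collect_eq
  proof (intro conjI allI impI)
    fix k x assume k: "k < n"
    show "((vderiv ^^ k) g has_vector_derivative (vderiv ^^ Suc k) g x) (at x)"
      using gk[of k] gk[of "Suc k"] k dg[OF k] by simp
  next
    fix k assume k: "k \<le> n"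
    have "continuous_on UNIV (gf k)" unfolding gf_def
      by (intro continuous_intros C) (use k in auto)
    then show "continuous_on UNIV ((vderiv ^^ k) g)" using gk[OF k] by simp
  qed
qed

lemma Cn_mult_upow:
  assumes "f \<in> Cn n"
  shows "(\<lambda>x. f x * u_pow p x) \<in> Cn n"
proof (induction p)
  case 0
  then show ?case using assms by (simp add: u_pow_def)
next
  case (Suc p)
  have "(\<lambda>x. f x * u_pow (Suc p) x) = (\<lambda>x. (f x * u_pow p x) * (complex_of_real x - \<i>))"
    by (simp add: u_pow_def algebra_simps)
  then show ?case using Cn_mult_u[OF Suc.IH] by simp
qed

lemma EA_leib_set:
  assumes "finite A" "J \<subseteq> A" "inj_on l A"
  shows "EA A F l * (\<Prod>j\<in>J. (complex_of_real (l j) - \<i>))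
     = (\<Sum>T\<in>Pow J. (-1) ^ card (J - T) * EA (A - (J - T)) (\<lambda>x. F x * (complex_of_real x - \<i>) ^ card T) l)"
proof -
  have "finite J" using assms(1,2) by (rule finite_subset[rotated])
  then show ?thesis using assms
  proof (induction J arbitrary: A F rule: finite_induct)
    case empty
    then show ?case by simp
  next
    case (insert j J)
    define u where "u x = complex_of_real x - \<i>" for x
    have jA: "j \<in> A" and JA: "J \<subseteq> A" and JA': "J \<subseteq> A - {j}" using insert by auto
    have injA': "inj_on l (A - {j})" using insert.prems(3) by (rule inj_on_subset) auto
    have finA': "finite (A - {j})" using insert.prems(1) by simp
    have IH1: "EA A (\<lambda>x. F x * u x) l * (\<Prod>j\<in>J. u (l j))
        = (\<Sum>T\<in>Pow J. (-1) ^ card (J - T) * EA (A - (J - T)) (\<lambda>x. (F x * u x) * u x ^ card T) l)"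
      unfolding u_def by (rule insert.IH[OF insert.prems(1) JA insert.prems(3)])
    have IH2: "EA (A - {j}) F l * (\<Prod>j\<in>J. u (l j))
        = (\<Sum>T\<in>Pow J. (-1) ^ card (J - T) * EA (A - {j} - (J - T)) (\<lambda>x. F x * u x ^ card T) l)"
      unfolding u_def by (rule insert.IH[OF finA' JA' injA'])
    have "EA A F l * (\<Prod>j\<in>insert j J. u (l j)) = (EA A F l * u (l j)) * (\<Prod>j\<in>J. u (l j))"
      using insert.hyps by (simp add: mult.assoc mult.commute)
    also have "EA A F l * u (l j) = EA A (\<lambda>x. F x * u x) l - EA (A - {j}) F l"
      unfolding u_def by (rule EA_leib[OF insert.prems(1) jA insert.prems(3)])
    also have "(EA A (\<lambda>x. F x * u x) l - EA (A - {j}) F l) * (\<Prod>j\<in>J. u (l j))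
       = (\<Sum>T\<in>Pow J. (-1) ^ card (J - T) * EA (A - (J - T)) (\<lambda>x. (F x * u x) * u x ^ card T) l)
         - (\<Sum>T\<in>Pow J. (-1) ^ card (J - T) * EA (A - {j} - (J - T)) (\<lambda>x. F x * u x ^ card T) l)"
      by (simp only: left_diff_distrib IH1 IH2)
    also have "\<dots> = (\<Sum>T\<in>Pow (insert j J). (-1) ^ card (insert j J - T) * EA (A - (insert j J - T)) (\<lambda>x. F x * u x ^ card T) l)"
    proof -
      define t where "t T = (-1) ^ card (insert j J - T) * EA (A - (insert j J - T)) (\<lambda>x. F x * u x ^ card T) l" for T
      have PJ: "Pow (insert j J) = Pow J \<union> insert j ` Pow J" by (rule Pow_insert)
      have disj: "Pow J \<inter> insert j ` Pow J = {}" using insert.hyps by auto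
      have inj: "inj_on (insert j) (Pow J)" using insert.hyps by (auto simp: inj_on_def)
      have finJ: "finite (Pow J)" using insert.hyps by simp
      have "(\<Sum>T\<in>Pow (insert j J). t T) = (\<Sum>T\<in>Pow J. t T) + (\<Sum>T\<in>insert j ` Pow J. t T)"
        unfolding PJ using finJ disj by (intro sum.union_disjoint) auto
      also have "(\<Sum>T\<in>insert j ` Pow J. t T) = (\<Sum>T\<in>Pow J. t (insert j T))"
        using inj by (simp add: sum.reindex)
      also have "(\<Sum>T\<in>Pow J. t (insert j T)) = (\<Sum>T\<in>Pow J. (-1) ^ card (J - T) * EA (A - (J - T)) (\<lambda>x. (F x * u x) * u x ^ card T) l)"
      proof (rule sum.cong[OF refl])
        fix T assume T: "T \<in> Pow J"
        then have fT: "finite T" using insert.hyps finite_subset by auto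
        have jT: "j \<notin> T" using T insert.hyps by auto
        have 1: "insert j J - insert j T = J - T" using insert.hyps by auto
        have 2: "card (insert j T) = Suc (card T)" using fT jT by simp
        show "t (insert j T) = (-1) ^ card (J - T) * EA (A - (J - T)) (\<lambda>x. (F x * u x) * u x ^ card T) l"
          unfolding t_def 1 2 by (simp add: mult.assoc)
      qed
      also have "(\<Sum>T\<in>Pow J. t T) = - (\<Sum>T\<in>Pow J. (-1) ^ card (J - T) * EA (A - {j} - (J - T)) (\<lambda>x. F x * u x ^ card T) l)"
        unfolding sum_negf[symmetric]
      proof (rule sum.cong[OF refl])
        fix T assume T: "T \<in> Pow J"
        have fJT: "finite (J - T)" using insert.hyps by simp
        have 1: "insert j J - T = insert j (J - T)" using T insert.hyps by auto
        have 2: "card (insert j (J - T)) = Suc (card (J - T))" using fJT insert.hyps by simp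
        have 3: "A - insert j (J - T) = A - {j} - (J - T)" by auto
        show "t T = - ((-1) ^ card (J - T) * EA (A - {j} - (J - T)) (\<lambda>x. F x * u x ^ card T) l)"
          unfolding t_def 1 2 3 by simp
      qed
      finally show ?thesis unfolding t_def by simp
    qed
    finally show ?case unfolding u_def .
  qed
qed

lemma W0_cont: "G \<in> W0 \<Longrightarrow> continuous_on UNIV G"
  unfolding W0_def by blast

lemma main_alpha:
  assumes \<alpha>: "\<forall>j\<in>{1..n}. \<alpha> j \<in> {0, 1}" and fW: "f \<in> Wnk n (\<Sum>j\<in>{1..n}. \<alpha> j)"
  shows "BS n (\<lambda>l. divdiff n f l * u_multi n \<alpha> l)"
proof -
  define k where "k = (\<Sum>j\<in>{1..n}. \<alpha> j)"
  have fC: "f \<in> Cn n" and fW0: "\<And>p. p \<le> k \<Longrightarrow> (vderiv ^^ (n - k + p)) (\<lambda>x. f x * u_pow p x) \<in> W0"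
    using fW unfolding Wnk_def k_def by auto
  define J where "J = {j\<in>{1..n}. \<alpha> j = 1}"
  have finJ: "finite J" and J0n: "J \<subseteq> {0..n}" and J1n: "J \<subseteq> {1..n}" unfolding J_def by auto
  have cardJ: "card J = k"
  proof -
    have "k = (\<Sum>j\<in>{1..n}. if j \<in> J then 1 else 0)"
      unfolding k_def by (rule sum.cong) (use \<alpha> in \<open>auto simp: J_def\<close>)
    also have "\<dots> = card J" using J1n by (simp add: sum.If_cases Int_absorb1)
    finally show ?thesis by simp
  qed
  have kn: "k \<le> n" using card_mono[OF _ J1n] cardJ by simp
  have um: "u_multi n \<alpha> l = (\<Prod>j\<in>J. (complex_of_real (l j) - \<i>))" for l
  proof -
    have "u_multi n \<alpha> l = (\<Prod>j\<in>{1..n}. if j \<in> J then complex_of_real (l j) - \<i> else 1)"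
      unfolding u_multi_def
    proof (rule prod.cong[OF refl])
      fix x assume x: "x \<in> {1..n}"
      then have "\<alpha> x = 0 \<or> \<alpha> x = 1" using \<alpha> by auto
      then show "(complex_of_real (l x) - \<i>) ^ \<alpha> x = (if x \<in> J then complex_of_real (l x) - \<i> else 1)"
        using x by (auto simp: J_def)
    qed
    also have "\<dots> = (\<Prod>j\<in>J. (complex_of_real (l j) - \<i>))" using J1n by (simp add: prod.If_cases Int_absorb1)
    finally show ?thesis .
  qed
  define A where "A T = {0..n} - (J - T)" for T
  define m where "m T = n - k + card T" for T :: "nat set"
  have cardA: "card (A T) = Suc (m T)" if "T \<subseteq> J" for T
  proof -
    have fT: "finite T" using that finJ finite_subset by auto
    have "card (J - T) = k - card T" using that fT cardJ by (simp add: card_Diff_subset)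
    moreover have "card (A T) = Suc n - card (J - T)" unfolding A_def using J0n finJ
      by (subst card_Diff_subset) auto
    moreover have "card T \<le> k" using card_mono[OF finJ that] cardJ by simp
    ultimately show ?thesis unfolding m_def using kn by simp
  qed
  have finA: "finite (A T)" for T unfolding A_def by simp
  define \<sigma> where "\<sigma> T = (SOME h. bij_betw h {0..m T} (A T))" for T
  have \<sigma>: "bij_betw (\<sigma> T) {0..m T} (A T)" if "T \<subseteq> J" for T
  proof -
    obtain h where "bij_betw h {0..<card (A T)} (A T)" using ex_bij_betw_nat_finite[OF finA] by blast
    then have "bij_betw h {0..m T} (A T)" using cardA[OF that] by (simp add: atLeastLessThanSuc_atLeastAtMost)
    then show ?thesis unfolding \<sigma>_def by (rule someI[where P="\<lambda>h. bij_betw h {0..m T} (A T)"])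
  qed
  have \<sigma>inj: "inj_on (\<sigma> T) {0..m T}" and \<sigma>img: "\<sigma> T ` {0..m T} = A T" if "T \<subseteq> J" for T
    using \<sigma>[OF that] by (auto simp: bij_betw_def)
  define F where "F T = (\<lambda>x. f x * u_pow (card T) x)" for T :: "nat set"
  define G where "G T = (vderiv ^^ m T) (F T)" for T
  have GW0: "G T \<in> W0" if "T \<subseteq> J" for T
  proof -
    have "card T \<le> k" using card_mono[OF finJ that] cardJ by simp
    then show ?thesis unfolding G_def F_def m_def by (rule fW0)
  qed
  have FC: "F T \<in> Cn (m T)" if "T \<subseteq> J" for T
  proof -
    have "card T \<le> k" using card_mono[OF finJ that] cardJ by simp
    then have "m T \<le> n" unfolding m_def using kn by simp
    then show ?thesis unfolding F_def by (rule Cn_mono[OF Cn_mult_upow[OF fC]])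
  qed
  define \<psi> where "\<psi> l = (\<Sum>T\<in>Pow J. (-1) ^ card (J - T) * K (m T) (G T) (\<lambda>i. l (\<sigma> T i)))" for l
  have ET\<psi>: "ET n \<psi>" unfolding \<psi>_def
  proof (rule ET_sum)
    show "finite (Pow J)" using finJ by simp
    show "\<forall>T\<in>Pow J. ET n (\<lambda>l. (-1) ^ card (J - T) * K (m T) (G T) (\<lambda>i. l (\<sigma> T i)))"
    proof
      fix T assume T: "T \<in> Pow J"
      then have TJ: "T \<subseteq> J" by simp
      have "ET n (\<lambda>l. K (m T) (G T) (\<lambda>i. l (\<sigma> T i)))"
        by (rule ET_reindex[OF K_ET[OF GW0[OF TJ]] \<sigma>inj[OF TJ]]) (simp add: \<sigma>img[OF TJ] A_def)
      then show "ET n (\<lambda>l. (-1) ^ card (J - T) * K (m T) (G T) (\<lambda>i. l (\<sigma> T i)))" by (rule ET_scale)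
    qed
  qed
  have eq: "divdiff n f l * u_multi n \<alpha> l = \<psi> l" for l
  proof (rule perturb_unique)
    define p where "p \<epsilon> = (\<lambda>i. l i + \<epsilon> * real i)" for \<epsilon> :: real
    have dK: "divdiff n f = K n ((vderiv ^^ n) f)" by (rule divdiff_K[OF fC])
    show "((\<lambda>\<epsilon>. divdiff n f (p \<epsilon>) * u_multi n \<alpha> (p \<epsilon>)) \<longlongrightarrow> divdiff n f l * u_multi n \<alpha> l) (at 0)"
    proof (rule tendsto_mult)
      show "((\<lambda>\<epsilon>. divdiff n f (p \<epsilon>)) \<longlongrightarrow> divdiff n f l) (at 0)"
        unfolding dK p_def by (rule K_line[OF Cn_cont[OF fC]])
      have "continuous_on UNIV (\<lambda>\<epsilon>. u_multi n \<alpha> (p \<epsilon>))"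
        unfolding u_multi_def p_def by (intro continuous_intros)
      then have "((\<lambda>\<epsilon>. u_multi n \<alpha> (p \<epsilon>)) \<longlongrightarrow> u_multi n \<alpha> (p 0)) (at 0)"
        by (simp add: continuous_on_def)
      then show "((\<lambda>\<epsilon>. u_multi n \<alpha> (p \<epsilon>)) \<longlongrightarrow> u_multi n \<alpha> l) (at 0)"
        unfolding p_def by simp
    qed
    show "((\<lambda>\<epsilon>. \<psi> (p \<epsilon>)) \<longlongrightarrow> \<psi> l) (at 0)"
      unfolding \<psi>_def p_def
    proof (intro tendsto_sum tendsto_mult tendsto_const)
      fix T assume "T \<in> Pow J"
      then have TJ: "T \<subseteq> J" by simp
      show "((\<lambda>\<epsilon>. K (m T) (G T) (\<lambda>i. l (\<sigma> T i) + \<epsilon> * real (\<sigma> T i))) \<longlongrightarrow> K (m T) (G T) (\<lambda>i. l (\<sigma> T i))) (at 0)"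
        by (rule K_line[OF W0_cont[OF GW0[OF TJ]]])
    qed
    have "\<forall>\<^sub>F \<epsilon> in at (0::real). inj_on (p \<epsilon>) {0..n}"
      unfolding p_def by (rule eventually_inj_perturb) simp
    then show "\<forall>\<^sub>F \<epsilon> in at 0. divdiff n f (p \<epsilon>) * u_multi n \<alpha> (p \<epsilon>) = \<psi> (p \<epsilon>)"
    proof eventually_elim
      case (elim \<epsilon>)
      define q where "q = p \<epsilon>"
      have inj: "inj_on q {0..n}" using elim unfolding q_def .
      have "divdiff n f q * u_multi n \<alpha> q = EA {0..n} f q * (\<Prod>j\<in>J. (complex_of_real (q j) - \<i>))"
        unfolding dK um by (simp add: K_E[OF fC inj])
      also have "\<dots> = (\<Sum>T\<in>Pow J. (-1) ^ card (J - T) * EA (A T) (\<lambda>x. f x * (complex_of_real x - \<i>) ^ card T) q)"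
        unfolding A_def by (rule EA_leib_set[OF _ J0n inj]) simp
      also have "\<dots> = \<psi> q" unfolding \<psi>_def
      proof (rule sum.cong[OF refl])
        fix T assume "T \<in> Pow J"
        then have TJ: "T \<subseteq> J" by simp
        have injq: "inj_on (\<lambda>i. q (\<sigma> T i)) {0..m T}"
        proof (rule inj_onI)
          fix i j assume ij: "i \<in> {0..m T}" "j \<in> {0..m T}" "q (\<sigma> T i) = q (\<sigma> T j)"
          have "\<sigma> T i \<in> {0..n}" "\<sigma> T j \<in> {0..n}" using ij(1,2) \<sigma>img[OF TJ] by (auto simp: A_def)
          then have "\<sigma> T i = \<sigma> T j" using inj_onD[OF inj ij(3)] by simp
          then show "i = j" using inj_onD[OF \<sigma>inj[OF TJ]] ij(1,2) by simp
        qed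
        have "EA (A T) (\<lambda>x. f x * (complex_of_real x - \<i>) ^ card T) q = EA (A T) (F T) q"
          by (simp add: F_def u_pow_def)
        also have "\<dots> = EA {0..m T} (F T) (\<lambda>i. q (\<sigma> T i))"
          unfolding \<sigma>img[OF TJ, symmetric] by (rule EA_reindex[OF \<sigma>inj[OF TJ]])
        also have "\<dots> = K (m T) (G T) (\<lambda>i. q (\<sigma> T i))"
          unfolding G_def by (rule K_E[OF FC[OF TJ] injq, symmetric])
        finally show "(-1) ^ card (J - T) * EA (A T) (\<lambda>x. f x * (complex_of_real x - \<i>) ^ card T) q
            = (-1) ^ card (J - T) * K (m T) (G T) (\<lambda>i. q (\<sigma> T i))" by simp
      qed
      finally show ?case unfolding q_def .
    qed
  qed
  have "(\<lambda>l. divdiff n f l * u_multi n \<alpha> l) = \<psi>" using eq by auto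
  then show ?thesis using ET_BS[OF ET\<psi>] by simp
qed

theorem theorem3p6:
  fixes n :: nat and f :: "real \<Rightarrow> complex" and \<alpha> :: "nat \<Rightarrow> nat"
  shows "(f \<in> Wn n \<longrightarrow> BS n (\<lambda>l. divdiff n f l * u_multi n (\<lambda>_. 1) l))
       \<and> ((\<forall>j\<in>{1..n}. \<alpha> j \<in> {0, 1}) \<and> f \<in> Wnk n (\<Sum>j\<in>{1..n}. \<alpha> j)
            \<longrightarrow> BS n (\<lambda>l. divdiff n f l * u_multi n \<alpha> l))"
proof (intro conjI impI)
  assume "f \<in> Wn n"
  then have "f \<in> Wnk n (\<Sum>j\<in>{1..n}. (\<lambda>_. 1::nat) j)" by (simp add: Wn_def Wnk_def)
  then show "BS n (\<lambda>l. divdiff n f l * u_multi n (\<lambda>_. 1) l)" by (rule main_alpha[rotated]) simp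
next
  assume "(\<forall>j\<in>{1..n}. \<alpha> j \<in> {0, 1}) \<and> f \<in> Wnk n (\<Sum>j\<in>{1..n}. \<alpha> j)"
  then show "BS n (\<lambda>l. divdiff n f l * u_multi n \<alpha> l)" using main_alpha by blast
qed

end
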